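(* Let $\gamma,\varepsilon^*,C^*,\lambda_1,\lambda_2>0$, set $\check C_0=C^*+\varepsilon^*/2$ and $\tilde C_0=C^*+1$, and assume $\lambda_1h\le\Delta t\le\lambda_2h$. Let $\check\rho^n,\check\rho^{n+1},\rho^n,\rho^{n+1},\hat\rho^{n+\frac12}\in\mathcal C$ satisfy, pointwise and on all faces: (a) $\varepsilon^*\le\check\rho^k\le C^*$ and $\|\nabla_h\check\rho^k\|_\infty\le C^*$ for $k=n,n+1$; $\|\check\rho^{n+1}-\check\rho^n\|_\infty\le C^*\Delta t$, $\|\nabla_h(\check\rho^{n+1}-\check\rho^n)\|_\infty\le C^*\Delta t$; (b) $\varepsilon^*/2\le\rho^{n+1}\le\check C_0$, $\rho^n>0$, $\|\nabla_h\rho^k\|_\infty\le\tilde C_0$ for $k=n,n+1$, and $\|\rho^{n+1}-\rho^n\|_\infty\le\tilde C_0\Delta t$; (c) $\varepsilon^*/2\le\hat\rho^{n+\frac12}\le\check C_0$ and $\frac34\le\hat\rho^{n+\frac12}/\rho^{n+1}\le\frac54$. Let $\tilde\rho^k=\check\rho^k-\rho^k$ and $\tilde S^{n+\frac12}=\check S^{n+\frac12}-S^{n+\frac12}$ with $$\check S^{n+\frac12}=\ln\check\rho^{n+1}-\frac{\check\rho^{n+1}-\check\rho^n}{2\check\rho^{n+1}}-\frac{(\check\rho^{n+1}-\check\rho^n)^2}{6(\check\rho^{n+1})^2},\quad S^{n+\frac12}=\ln\rho^{n+1}-\frac{\rho^{n+1}-\rho^n}{2\rho^{n+1}}-\frac{(\rho^{n+1}-\rho^n)^2}{6(\rho^{n+1})^2}.$$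 Then there exist positive constants $\tilde C_1,M_1$ depending only on $\varepsilon^*,C^*,\gamma,\lambda_1,\lambda_2$ (and $|\Omega|$) such that, for $h$ sufficiently small, $$\gamma\big[\hat\rho^{n+\frac12}\nabla_h\tilde S^{n+\frac12},\nabla_h(\tilde\rho^{n+1}+\tilde\rho^n)\big]\ge\frac\gamma4\|\nabla_h(\tilde\rho^{n+1}+\tilde\rho^n)\|_2^2-\tilde C_1\big(\|\tilde\rho^{n+1}\|_2^2+\|\tilde\rho^n\|_2^2\big)-M_1h^8.$$
   Context: Grid setting: $\Omega=(a,b)^3$, $N\in\mathbb N$, $h=(b-a)/N$, cell centers $(a+(i-\tfrac12)h,a+(j-\tfrac12)h,a+(k-\tfrac12)h)$, $1\le i,j,k\le N$. $\mathcal C$ is the space of cell-centered grid functions extended to ghost points by the discrete homogeneous Neumann condition $u_{0,j,k}=u_{1,j,k}$, $u_{N+1,j,k}=u_{N,j,k}$ (likewise in $j,k$). $D_xf_{i+1/2,j,k}=(f_{i+1,j,k}-f_{i,j,k})/h$, $A_xf_{i+1/2,j,k}=(f_{i+1,j,k}+f_{i,j,k})/2$; for face-centered $g$, $a_xg_{i,j,k}=(g_{i+1/2,j,k}+g_{i-1/2,j,k})/2$; analogously in $y,z$; $\nabla_hf=(D_xf,D_yf,D_zf)$. $\langle f,g\rangle=h^3\sum_{i,j,k=1}^Nf_{i,j,k}g_{i,j,k}$, $\|f\|_2^2=\langle f,f\rangle$, $\|f\|_\infty=\max|f_{i,j,k}|$, $\|\nabla_hf\|_\infty$ is the maximum of $|D_xf|,|D_yf|,|D_zf|$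 over all faces. For face-centered vector fields $[\vec f,\vec g]=\langle a_x(f^xg^x)+a_y(f^yg^y)+a_z(f^zg^z),1\rangle$, $\|\nabla_hf\|_2^2=[\nabla_hf,\nabla_hf]$, and for cell-centered $\mathcal D$, $[\mathcal D\nabla_hf,\nabla_hg]:=[(A_x\mathcal D\,D_xf,A_y\mathcal D\,D_yf,A_z\mathcal D\,D_zf),\nabla_hg]$. Nonlinear functions are applied pointwise. *)

theory Defs
  imports Complex_Main
begin

text \<open>Cell (i,j,k), 1 <= i,j,k <= N,
  stores the value at the cell centre. Indices outside 1..N are mapped back by clamping,
  which realises the discrete homogeneous Neumann extension to ghost points.\<close>

type_synonym grid = "nat \<Rightarrow> nat \<Rightarrow> nat \<Rightarrow> real"

text \<open>Face-centered vector fields: the x-component at index (i,j,k) is the value on the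
  face (i+1/2, j, k), i = 0..N; analogously for y and z.\<close>
type_synonym fgrid = "grid \<times> grid \<times> grid"

definition cl :: "nat \<Rightarrow> nat \<Rightarrow> nat" where
  "cl N i = max 1 (min N i)"

definition ext :: "nat \<Rightarrow> grid \<Rightarrow> grid" where
  "ext N f i j k = f (cl N i) (cl N j) (cl N k)"

definition Dx :: "real \<Rightarrow> nat \<Rightarrow> grid \<Rightarrow> grid" where
  "Dx h N f i j k = (ext N f (Suc i) j k - ext N f i j k) / h"
definition Dy :: "real \<Rightarrow> nat \<Rightarrow> grid \<Rightarrow> grid" where
  "Dy h N f i j k = (ext N f i (Suc j) k - ext N f i j k) / h"
definition Dz :: "real \<Rightarrow> nat \<Rightarrow> grid \<Rightarrow> grid" where
  "Dz h N f i j k = (ext N f i j (Suc k) - ext N f i j k) / h"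

definition Ax :: "nat \<Rightarrow> grid \<Rightarrow> grid" where
  "Ax N f i j k = (ext N f (Suc i) j k + ext N f i j k) / 2"
definition Ay :: "nat \<Rightarrow> grid \<Rightarrow> grid" where
  "Ay N f i j k = (ext N f i (Suc j) k + ext N f i j k) / 2"
definition Az :: "nat \<Rightarrow> grid \<Rightarrow> grid" where
  "Az N f i j k = (ext N f i j (Suc k) + ext N f i j k) / 2"

definition grad :: "real \<Rightarrow> nat \<Rightarrow> grid \<Rightarrow> fgrid" where
  "grad h N f = (Dx h N f, Dy h N f, Dz h N f)"

definition dgrad :: "real \<Rightarrow> nat \<Rightarrow> grid \<Rightarrow> grid \<Rightarrow> fgrid" where
  "dgrad h N D f = ((\<lambda>i j k. Ax N D i j k * Dx h N f i j k),
                    (\<lambda>i j k. Ay N D i j k * Dy h N f i j k),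
                    (\<lambda>i j k. Az N D i j k * Dz h N f i j k))"

definition ip :: "real \<Rightarrow> nat \<Rightarrow> grid \<Rightarrow> grid \<Rightarrow> real" where
  "ip h N f g = h^3 * (\<Sum>i\<in>{1..N}. \<Sum>j\<in>{1..N}. \<Sum>k\<in>{1..N}. f i j k * g i j k)"

definition l2sq :: "real \<Rightarrow> nat \<Rightarrow> grid \<Rightarrow> real" where
  "l2sq h N f = ip h N f f"

text \<open>face inner product \<open>[F,G] = \<langle>a_x(F^x G^x)+a_y(F^y G^y)+a_z(F^z G^z),1\<rangle>\<close>;
  the face (i-1/2) has index i-1.\<close>
definition brk :: "real \<Rightarrow> nat \<Rightarrow> fgrid \<Rightarrow> fgrid \<Rightarrow> real" where
  "brk h N F G = (case F of (Fx, Fy, Fz) \<Rightarrow> case G of (Gx, Gy, Gz) \<Rightarrow>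
     ip h N (\<lambda>i j k.
        (Fx i j k * Gx i j k + Fx (i - 1) j k * Gx (i - 1) j k) / 2
      + (Fy i j k * Gy i j k + Fy i (j - 1) k * Gy i (j - 1) k) / 2
      + (Fz i j k * Gz i j k + Fz i j (k - 1) * Gz i j (k - 1)) / 2) (\<lambda>i j k. 1))"

definition gnorm2 :: "real \<Rightarrow> nat \<Rightarrow> grid \<Rightarrow> real" where
  "gnorm2 h N f = brk h N (grad h N f) (grad h N f)"

definition on_cells :: "nat \<Rightarrow> (nat \<Rightarrow> nat \<Rightarrow> nat \<Rightarrow> bool) \<Rightarrow> bool" where
  "on_cells N P = (\<forall>i\<in>{1..N}. \<forall>j\<in>{1..N}. \<forall>k\<in>{1..N}. P i j k)"

definition sup_le :: "nat \<Rightarrow> grid \<Rightarrow> real \<Rightarrow> bool" where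
  "sup_le N f c = on_cells N (\<lambda>i j k. \<bar>f i j k\<bar> \<le> c)"

text \<open>\<open>\<parallel>\<nabla>_h f\<parallel>_\<infinity> \<le> c\<close>, maximum over all faces (face index 0..N in the normal direction)\<close>
definition grad_sup_le :: "real \<Rightarrow> nat \<Rightarrow> grid \<Rightarrow> real \<Rightarrow> bool" where
  "grad_sup_le h N f c = (\<forall>i\<in>{0..N}. \<forall>j\<in>{1..N}. \<forall>k\<in>{1..N}.
      \<bar>Dx h N f i j k\<bar> \<le> c \<and> \<bar>Dy h N f j i k\<bar> \<le> c \<and> \<bar>Dz h N f j k i\<bar> \<le> c)"

definition Sfun :: "grid \<Rightarrow> grid \<Rightarrow> grid" where
  "Sfun r1 r0 i j k = ln (r1 i j k) - (r1 i j k - r0 i j k) / (2 * r1 i j k)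
      - (r1 i j k - r0 i j k)^2 / (6 * (r1 i j k)^2)"

end

theory Submission
  imports Defs
begin


definition Fs :: "real \<Rightarrow> real \<Rightarrow> real" where
  "Fs x y = ln x - (x - y) / (2 * x) - (x - y)^2 / (6 * x^2)"
definition gA :: "real \<Rightarrow> real \<Rightarrow> real" where
  "gA x d = 1/(2*x) + d/(6*x^2) + d^2/(3*x^3)"
definition gB :: "real \<Rightarrow> real \<Rightarrow> real" where
  "gB x d = 1/(2*x) + d/(3*x^2)"

lemma Fs_deq:
  assumes "(p::real) > 0"
  shows "a / p - ((a - b) * (2 * p) - d * (a * 2)) / ((2 * p) * (2 * p))
     - (12 * ((a - b) * (d * p^2)) - d^2 * (12 * (a * p))) / (36 * p ^ 4)
     = gA p d * a + gB p d * b"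
  using assms by (simp add: gA_def gB_def field_simps power2_eq_square power3_eq_cube power4_eq_xxxx)

lemma Fs_deriv:
  assumes "x1 + t*a > 0"
  shows "((\<lambda>t. Fs (x1+t*a) (y1+t*b)) has_real_derivative
     (gA (x1+t*a) ((x1+t*a)-(y1+t*b)) * a + gB (x1+t*a) ((x1+t*a)-(y1+t*b)) * b)) (at t)"
proof -
  have ne: "x1 + t*a \<noteq> 0" using assms by auto
  show ?thesis unfolding Fs_def
    apply (rule DERIV_cong)
     apply (intro derivative_eq_intros)
    using ne assms apply (auto)
    using Fs_deq[of "x1+t*a" a b "x1 + t * a - (y1 + t * b)"] assms
    by (simp add: distrib_left)
qed

lemma mvt_T:
  assumes "x1 > 0" "x2 > 0" "X1 > 0" "X2 > 0"
  shows "\<exists>\<xi>. 0 \<le> \<xi> \<and> \<xi> \<le> 1 \<and>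
    (Fs x2 y2 - Fs X2 Y2) - (Fs x1 y1 - Fs X1 Y1) =
      gA (x1+\<xi>*(x2-x1)) ((x1+\<xi>*(x2-x1)) - (y1+\<xi>*(y2-y1))) * (x2-x1)
    + gB (x1+\<xi>*(x2-x1)) ((x1+\<xi>*(x2-x1)) - (y1+\<xi>*(y2-y1))) * (y2-y1)
    - gA (X1+\<xi>*(X2-X1)) ((X1+\<xi>*(X2-X1)) - (Y1+\<xi>*(Y2-Y1))) * (X2-X1)
    - gB (X1+\<xi>*(X2-X1)) ((X1+\<xi>*(X2-X1)) - (Y1+\<xi>*(Y2-Y1))) * (Y2-Y1)"
proof -
  have pos: "z1 + t*(z2-z1) > 0" if "z1 > 0" "z2 > 0" "0 \<le> t" "t \<le> 1" for z1 z2 t :: real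
  proof -
    have "z1 + t*(z2-z1) = (1-t)*z1 + t*z2" by (simp add: algebra_simps)
    moreover have "(1-t)*z1 \<ge> 0" "t*z2 \<ge> 0" using that by auto
    moreover have "(1-t)*z1 > 0 \<or> t*z2 > 0" using that
      by (cases "t = 0") auto
    ultimately show ?thesis by linarith
  qed
  let ?f = "\<lambda>t. Fs (x1+t*(x2-x1)) (y1+t*(y2-y1)) - Fs (X1+t*(X2-X1)) (Y1+t*(Y2-Y1))"
  have "\<exists>z. 0 < z \<and> z < 1 \<and> ?f 1 - ?f 0 = (1 - 0) *
      ((gA (x1+z*(x2-x1)) ((x1+z*(x2-x1)) - (y1+z*(y2-y1))) * (x2-x1)
    + gB (x1+z*(x2-x1)) ((x1+z*(x2-x1)) - (y1+z*(y2-y1))) * (y2-y1))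
    - (gA (X1+z*(X2-X1)) ((X1+z*(X2-X1)) - (Y1+z*(Y2-Y1))) * (X2-X1)
    + gB (X1+z*(X2-X1)) ((X1+z*(X2-X1)) - (Y1+z*(Y2-Y1))) * (Y2-Y1)))"
    apply (rule MVT2)
     apply simp
    apply (rule DERIV_diff)
     apply (rule Fs_deriv) using pos assms apply blast
    apply (rule Fs_deriv) using pos assms apply blast
    done
  then obtain z where "0 < z" "z < 1" and eq: "?f 1 - ?f 0 = (1 - 0) *
      ((gA (x1+z*(x2-x1)) ((x1+z*(x2-x1)) - (y1+z*(y2-y1))) * (x2-x1)
    + gB (x1+z*(x2-x1)) ((x1+z*(x2-x1)) - (y1+z*(y2-y1))) * (y2-y1))
    - (gA (X1+z*(X2-X1)) ((X1+z*(X2-X1)) - (Y1+z*(Y2-Y1))) * (X2-X1)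
    + gB (X1+z*(X2-X1)) ((X1+z*(X2-X1)) - (Y1+z*(Y2-Y1))) * (Y2-Y1)))" by blast
  show ?thesis
    apply (rule exI[of _ z])
    using \<open>0<z\<close> \<open>z<1\<close> eq by (simp add: algebra_simps)
qed

lemma lipm:
  fixes p P q Q a b E Bq Bp :: real
  assumes "\<bar>p-P\<bar> \<le> a*E" "\<bar>q-Q\<bar> \<le> b*E" "\<bar>q\<bar> \<le> Bq" "\<bar>P\<bar> \<le> Bp"
  shows "\<bar>p*q - P*Q\<bar> \<le> (a*Bq + Bp*b)*E"
proof -
  have "p*q - P*Q = (p-P)*q + P*(q-Q)" by (simp add: algebra_simps)
  hence "\<bar>p*q - P*Q\<bar> \<le> \<bar>p-P\<bar>*\<bar>q\<bar> + \<bar>P\<bar>*\<bar>q-Q\<bar>"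
    by (metis abs_mult abs_triangle_ineq)
  also have "\<dots> \<le> (a*E)*Bq + Bp*(b*E)"
    apply (rule add_mono)
     apply (rule mult_mono) using assms apply auto[4]
    apply (rule mult_mono) using assms apply auto[4]
    done
  finally show ?thesis by (simp add: algebra_simps)
qed

lemma inv_bounds:
  fixes c x X E :: real
  assumes "c > 0" "x \<ge> c" "X \<ge> c" "\<bar>x - X\<bar> \<le> E"
  shows "\<bar>1/x\<bar> \<le> 1/c" "\<bar>1/x - 1/X\<bar> \<le> (1/c^2)*E"
proof -
  show "\<bar>1/x\<bar> \<le> 1/c" using assms by (simp add: frac_le)
  have "1/x - 1/X = (X - x)/(x*X)" using assms by (simp add: field_simps)
  hence "\<bar>1/x - 1/X\<bar> = \<bar>x - X\<bar>/(x*X)" using assms by (simp add: abs_minus_commute)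
  also have "\<dots> \<le> E/(c*c)"
    apply (rule frac_le) using assms apply auto
    apply (rule mult_mono) using assms by auto
  finally show "\<bar>1/x - 1/X\<bar> \<le> (1/c^2)*E" by (simp add: power2_eq_square)
qed

definition LA :: "real \<Rightarrow> real \<Rightarrow> real" where
  "LA c M = (1/c^2)/2 + (1/c^2 + 2*M/c^3)/6 + (2*M/c^3 + 3*M^2/c^4)/3"
definition LB :: "real \<Rightarrow> real \<Rightarrow> real" where
  "LB c M = (1/c^2)/2 + (1/c^2 + 2*M/c^3)/3"
definition GG :: "real \<Rightarrow> real \<Rightarrow> real" where
  "GG c M = 1/(2*c) + M/c^2 + M^2/c^3"

lemma gA_u: "x \<noteq> 0 \<Longrightarrow> gA x d = (1/x)/2 + (d*((1/x)*(1/x)))/6 + ((d*d)*((1/x)*((1/x)*(1/x))))/3"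
  by (simp add: gA_def power2_eq_square power3_eq_cube)
lemma gB_u: "x \<noteq> 0 \<Longrightarrow> gB x d = (1/x)/2 + (d*((1/x)*(1/x)))/3"
  by (simp add: gB_def power2_eq_square)

lemma lin3: fixes S P Q R a b b' e e' :: real
  shows "S \<le> P/2 + Q/6 + R/3 \<Longrightarrow> P \<le> a \<Longrightarrow> Q \<le> b \<Longrightarrow> b \<le> b' \<Longrightarrow> R \<le> e \<Longrightarrow> e \<le> e'
   \<Longrightarrow> 0 \<le> b' \<Longrightarrow> 0 \<le> e' \<Longrightarrow> S \<le> a/2 + b' + e'" by linarith
lemma lin2: fixes S P Q a b b' :: real
  shows "S \<le> P/2 + Q/3 \<Longrightarrow> P \<le> a \<Longrightarrow> Q \<le> b \<Longrightarrow> b \<le> b' \<Longrightarrow> 0 \<le> b' \<Longrightarrow> 0 \<le> e'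
   \<Longrightarrow> S \<le> a/2 + b' + e'" by linarith
lemma lin3b: fixes P Q R a b e :: real
  shows "P \<le> a \<Longrightarrow> Q \<le> b \<Longrightarrow> R \<le> e \<Longrightarrow> P/2 + Q/6 + R/3 \<le> a/2 + b/6 + e/3" by linarith
lemma lin2b: fixes P Q a b :: real
  shows "P \<le> a \<Longrightarrow> Q \<le> b \<Longrightarrow> P/2 + Q/3 \<le> a/2 + b/3" by linarith
lemma abs3: fixes p q r :: real shows "\<bar>p/2 + q/6 + r/3\<bar> \<le> \<bar>p\<bar>/2 + \<bar>q\<bar>/6 + \<bar>r\<bar>/3"
    using abs_triangle_ineq[of "p/2+q/6" "r/3"] abs_triangle_ineq[of "p/2" "q/6"] by simp
lemma abs2: fixes p q :: real shows "\<bar>p/2 + q/3\<bar> \<le> \<bar>p\<bar>/2 + \<bar>q\<bar>/3"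
    using abs_triangle_ineq[of "p/2" "q/3"] by simp

lemma gAB_lip:
  fixes c M x X d D E :: real
  assumes c: "c > 0" and x: "x \<ge> c" and X: "X \<ge> c" and d: "\<bar>d\<bar> \<le> M" and D: "\<bar>D\<bar> \<le> M"
    and xX: "\<bar>x - X\<bar> \<le> E" and dD: "\<bar>d - D\<bar> \<le> E"
  shows "\<bar>gA x d - gA X D\<bar> \<le> LA c M * E" "\<bar>gB x d - gB X D\<bar> \<le> LB c M * E"
proof -
  define u where "u = 1/x"
  define U where "U = 1/X"
  have X': "\<bar>X - x\<bar> \<le> E" using xX by (simp add: abs_minus_commute)
  have u1: "\<bar>u\<bar> \<le> 1/c" and U1: "\<bar>U\<bar> \<le> 1/c" and uU: "\<bar>u - U\<bar> \<le> (1/c^2)*E"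
    using inv_bounds[OF c x X xX] inv_bounds[OF c X x X'] u_def U_def by auto
  have E0: "E \<ge> 0" using xX by linarith
  have M0: "M \<ge> 0" using d by linarith
  have uu1: "\<bar>u*u\<bar> \<le> 1/c^2" "\<bar>U*U\<bar> \<le> 1/c^2"
    using mult_mono[OF u1 u1] mult_mono[OF U1 U1] c by (auto simp: abs_mult power2_eq_square)
  have "\<bar>u*u - U*U\<bar> \<le> ((1/c^2)*(1/c) + (1/c)*(1/c^2))*E" by (rule lipm[OF uU uU u1 U1])
  also have "\<dots> = (2/c^3)*E" by (simp add: power2_eq_square power3_eq_cube)
  finally have uuU: "\<bar>u*u - U*U\<bar> \<le> (2/c^3)*E" .
  have "\<bar>u*(u*u) - U*(U*U)\<bar> \<le> ((1/c^2)*(1/c^2) + (1/c)*(2/c^3))*E" by (rule lipm[OF uU uuU uu1(1) U1])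
  also have "\<dots> = (3/c^4)*E" by (simp add: power2_eq_square power3_eq_cube power4_eq_xxxx)
  finally have uuuU: "\<bar>u*(u*u) - U*(U*U)\<bar> \<le> (3/c^4)*E" .
  have uuu1: "\<bar>u*(u*u)\<bar> \<le> 1/c^3" "\<bar>U*(U*U)\<bar> \<le> 1/c^3"
    using mult_mono[OF u1 uu1(1)] mult_mono[OF U1 uu1(2)] c by (auto simp: abs_mult power3_eq_cube power2_eq_square mult.assoc)
  have dD1: "\<bar>d - D\<bar> \<le> 1*E" using dD by simp
  have "\<bar>d*(u*u) - D*(U*U)\<bar> \<le> (1*(1/c^2) + M*(2/c^3))*E" by (rule lipm[OF dD1 uuU uu1(1) D])
  hence t2: "\<bar>d*(u*u) - D*(U*U)\<bar> \<le> (1/c^2 + 2*M/c^3)*E" by (simp add: mult.commute)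
  have "\<bar>d*d - D*D\<bar> \<le> (1*M + M*1)*E" by (rule lipm[OF dD1 dD1 d D])
  hence ddD: "\<bar>d*d - D*D\<bar> \<le> (2*M)*E" by simp
  have DD: "\<bar>D*D\<bar> \<le> M^2" using mult_mono[OF D D] M0 by (auto simp: abs_mult power2_eq_square)
  have "\<bar>(d*d)*(u*(u*u)) - (D*D)*(U*(U*U))\<bar> \<le> ((2*M)*(1/c^3) + M^2*(3/c^4))*E"
    by (rule lipm[OF ddD uuuU uuu1(1) DD])
  hence t3: "\<bar>(d*d)*(u*(u*u)) - (D*D)*(U*(U*U))\<bar> \<le> (2*M/c^3 + 3*M^2/c^4)*E" by (simp add: mult.commute)
  have xn: "x \<noteq> 0" "X \<noteq> 0" using c x X by auto
  have eA: "gA x d - gA X D = (u - U)/2 + (d*(u*u) - D*(U*U))/6 + ((d*d)*(u*(u*u)) - (D*D)*(U*(U*U)))/3"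
    by (simp only: gA_u[OF xn(1)] gA_u[OF xn(2)] u_def[symmetric] U_def[symmetric]) (simp add: field_simps)
  have eB: "gB x d - gB X D = (u - U)/2 + (d*(u*u) - D*(U*U))/3"
    by (simp only: gB_u[OF xn(1)] gB_u[OF xn(2)] u_def[symmetric] U_def[symmetric]) (simp add: field_simps)
  have "\<bar>gA x d - gA X D\<bar> \<le> \<bar>u - U\<bar>/2 + \<bar>d*(u*u) - D*(U*U)\<bar>/6 + \<bar>(d*d)*(u*(u*u)) - (D*D)*(U*(U*U))\<bar>/3"
    unfolding eA by (rule abs3)
  also have "\<dots> \<le> ((1/c^2)*E)/2 + ((1/c^2 + 2*M/c^3)*E)/6 + ((2*M/c^3 + 3*M^2/c^4)*E)/3"
    by (rule lin3b[OF uU t2 t3])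
  also have "\<dots> = LA c M * E" by (simp add: LA_def algebra_simps)
  finally show "\<bar>gA x d - gA X D\<bar> \<le> LA c M * E" .
  have "\<bar>gB x d - gB X D\<bar> \<le> \<bar>u - U\<bar>/2 + \<bar>d*(u*u) - D*(U*U)\<bar>/3"
    unfolding eB by (rule abs2)
  also have "\<dots> \<le> ((1/c^2)*E)/2 + ((1/c^2 + 2*M/c^3)*E)/3"
    by (rule lin2b[OF uU t2])
  also have "\<dots> = LB c M * E" by (simp add: LB_def algebra_simps)
  finally show "\<bar>gB x d - gB X D\<bar> \<le> LB c M * E" .
qed

lemma gAB_bnd:
  fixes c M x d :: real
  assumes c: "c > 0" and x: "x \<ge> c" and d: "\<bar>d\<bar> \<le> M"
  shows "\<bar>gA x d\<bar> \<le> GG c M" "\<bar>gB x d\<bar> \<le> GG c M"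
    "\<bar>gA x d - 1/(2*x)\<bar> \<le> \<bar>d\<bar> * (1/c^2 + M/c^3)"
    "\<bar>gB x d - 1/(2*x)\<bar> \<le> \<bar>d\<bar> * (1/c^2)"
proof -
  define u where "u = 1/x"
  have u1: "\<bar>u\<bar> \<le> 1/c" using inv_bounds(1)[OF c x x, of 0] u_def by simp
  have M0: "M \<ge> 0" using d by linarith
  have uu1: "\<bar>u*u\<bar> \<le> 1/c^2"
    using mult_mono[OF u1 u1] c by (auto simp: abs_mult power2_eq_square)
  have uuu1: "\<bar>u*(u*u)\<bar> \<le> 1/c^3"
    using mult_mono[OF u1 uu1] c by (auto simp: abs_mult power3_eq_cube power2_eq_square mult.assoc)
  have a2: "\<bar>d*(u*u)\<bar> \<le> \<bar>d\<bar> * (1/c^2)"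
    using mult_left_mono[OF uu1, of "\<bar>d\<bar>"] by (simp add: abs_mult)
  have dd: "\<bar>d*d\<bar> \<le> \<bar>d\<bar>*M" using mult_left_mono[OF d, of "\<bar>d\<bar>"] by (simp add: abs_mult)
  have a3: "\<bar>(d*d)*(u*(u*u))\<bar> \<le> (\<bar>d\<bar>*M) * (1/c^3)"
    using mult_mono[OF dd uuu1] M0 by (simp add: abs_mult)
  have a2': "\<bar>d\<bar> * (1/c^2) \<le> M/c^2" using d c by (simp add: divide_right_mono)
  have a3': "(\<bar>d\<bar>*M) * (1/c^3) \<le> M^2/c^3"
    using mult_right_mono[OF d M0] c by (simp add: divide_right_mono power2_eq_square)
  have xn: "x \<noteq> 0" using c x by auto
  have hu: "1/(2*x) = u/2" using u_def by simp
  have eA: "gA x d = u/2 + (d*(u*u))/6 + ((d*d)*(u*(u*u)))/3" using gA_u[OF xn] u_def by simp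
  have eB: "gB x d = u/2 + (d*(u*u))/3" using gB_u[OF xn] u_def by simp
  have c1: "1/(2*c) = (1/c)/2" by simp
  have n1: "M/c^2 \<ge> 0" "M^2/c^3 \<ge> 0" "\<bar>d\<bar> * (1/c^2) \<ge> 0" "(\<bar>d\<bar>*M) * (1/c^3) \<ge> 0"
    using M0 c by auto
  have tri: "\<bar>p/2 + q/6 + r/3\<bar> \<le> \<bar>p\<bar>/2 + \<bar>q\<bar>/6 + \<bar>r\<bar>/3" for p q r :: real
    using abs_triangle_ineq[of "p/2+q/6" "r/3"] abs_triangle_ineq[of "p/2" "q/6"] by simp
  have tri2: "\<bar>p/2 + q/3\<bar> \<le> \<bar>p\<bar>/2 + \<bar>q\<bar>/3" for p q :: real
    using abs_triangle_ineq[of "p/2" "q/3"] by simp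
  show "\<bar>gA x d\<bar> \<le> GG c M" unfolding eA GG_def c1
    by (rule lin3[OF tri u1 a2 a2' a3 a3' n1(1,2)])
  show "\<bar>gB x d\<bar> \<le> GG c M" unfolding eB GG_def c1
    by (rule lin2[OF tri2 u1 a2 a2' n1(1,2)])
  have e3: "\<bar>d\<bar> * (1/c^2 + M/c^3) = \<bar>d\<bar> * (1/c^2) + (\<bar>d\<bar>*M) * (1/c^3)" by (simp add: algebra_simps)
  have q1: "\<bar>gA x d - 1/(2*x)\<bar> \<le> \<bar>d*(u*u)\<bar>/6 + \<bar>(d*d)*(u*(u*u))\<bar>/3"
    unfolding eA hu using abs_triangle_ineq[of "(d*(u*u))/6" "((d*d)*(u*(u*u)))/3"] by simp
  have q2: "\<bar>gB x d - 1/(2*x)\<bar> = \<bar>d*(u*u)\<bar>/3"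
    unfolding eB hu by simp
  have l1: "A \<le> Q/6 + R/3 \<Longrightarrow> Q \<le> b \<Longrightarrow> R \<le> e \<Longrightarrow> 0 \<le> b \<Longrightarrow> 0 \<le> e \<Longrightarrow> A \<le> b + e" for A Q R b e :: real
    by linarith
  have l2: "A = Q/3 \<Longrightarrow> Q \<le> b \<Longrightarrow> 0 \<le> b \<Longrightarrow> A \<le> b" for A Q b :: real
    by linarith
  show "\<bar>gA x d - 1/(2*x)\<bar> \<le> \<bar>d\<bar> * (1/c^2 + M/c^3)" unfolding e3
    by (rule l1[OF q1 a2 a3 n1(3,4)])
  show "\<bar>gB x d - 1/(2*x)\<bar> \<le> \<bar>d\<bar> * (1/c^2)"
    by (rule l2[OF q2 a2 n1(3)])
qed

lemma cvx_ge: fixes p q c t :: real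
  assumes "p \<ge> c" "q \<ge> c" "0 \<le> t" "t \<le> 1" shows "p + t*(q-p) \<ge> c"
proof -
  have "p + t*(q-p) = (1-t)*p + t*q" by (simp add: algebra_simps)
  moreover have "(1-t)*p \<ge> (1-t)*c" "t*q \<ge> t*c" using assms by (auto intro: mult_left_mono)
  ultimately show ?thesis by (simp add: algebra_simps)
qed

lemma cvx_abs: fixes p q B t :: real
  assumes "\<bar>p\<bar> \<le> B" "\<bar>q\<bar> \<le> B" "0 \<le> t" "t \<le> 1" shows "\<bar>p + t*(q-p)\<bar> \<le> B"
proof -
  have "p + t*(q-p) = (1-t)*p + t*q" by (simp add: algebra_simps)
  moreover have "\<bar>(1-t)*p\<bar> \<le> (1-t)*B" "\<bar>t*q\<bar> \<le> t*B" using assms by (auto simp: abs_mult intro: mult_left_mono)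
  moreover have "(1-t)*B + t*B = B" by (simp add: algebra_simps)
  ultimately show ?thesis by (smt (verit))
qed

lemma cvx_abs2: fixes p q t :: real
  assumes "0 \<le> t" "t \<le> 1" shows "\<bar>p + t*(q-p)\<bar> \<le> \<bar>p\<bar> + \<bar>q\<bar>"
  using cvx_abs[of p "\<bar>p\<bar> + \<bar>q\<bar>" q t] assms by auto

lemma tabs: fixes a t :: real assumes "0 \<le> t" "t \<le> 1" shows "\<bar>t*a\<bar> \<le> \<bar>a\<bar>"
  using assms by (simp add: abs_mult mult_left_le_one_le)

lemma sq4: fixes a b c d :: real shows "(\<bar>a\<bar>+\<bar>b\<bar>+\<bar>c\<bar>+\<bar>d\<bar>)^2 \<le> 4*(a^2+b^2+c^2+d^2)"
proof -
  have "0 \<le> (\<bar>a\<bar>-\<bar>b\<bar>)^2 + (\<bar>a\<bar>-\<bar>c\<bar>)^2 + (\<bar>a\<bar>-\<bar>d\<bar>)^2 + (\<bar>b\<bar>-\<bar>c\<bar>)^2 + (\<bar>b\<bar>-\<bar>d\<bar>)^2 + (\<bar>c\<bar>-\<bar>d\<bar>)^2"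
    by simp
  thus ?thesis by (simp add: power2_eq_square algebra_simps)
qed

definition Kface :: "real \<Rightarrow> real \<Rightarrow> real \<Rightarrow> real" where
  "Kface \<epsilon> C lam2 = (let cc = \<epsilon>/2; MM = (C+1)*lam2; Q0 = C + \<epsilon>/2;
      Ka = MM*(1/cc^2 + MM/cc^3); K2 = 2*Ka + (LA cc MM + LB cc MM)*(C+1);
      del = \<epsilon>/20; K0 = (4*C+2)^2*(Q0*GG cc MM + 1/4) in
      16*Q0^2*K2^2 + 4*K0/del^2 + 1)"

lemma face_bound:
  fixes \<epsilon> C lam2 h dt x1 x2 y1 y2 X1 X2 Y1 Y2 q1 q2 :: real
  assumes eps: "\<epsilon> > 0" and C: "C > 0" and lam: "lam2 > 0"
    and h: "0 < h" "h \<le> 1" "h \<le> \<epsilon>/(40*(C+1))" and dt: "dt \<le> lam2*h"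
    and x1: "\<epsilon> \<le> x1" "x1 \<le> C" and x2: "\<epsilon> \<le> x2" "x2 \<le> C"
    and X1: "\<epsilon>/2 \<le> X1" "X1 \<le> C+\<epsilon>/2" and X2: "\<epsilon>/2 \<le> X2" "X2 \<le> C+\<epsilon>/2"
    and d1: "\<bar>x1-y1\<bar> \<le> C*dt" and d2: "\<bar>x2-y2\<bar> \<le> C*dt"
    and D1: "\<bar>X1-Y1\<bar> \<le> (C+1)*dt" and D2: "\<bar>X2-Y2\<bar> \<le> (C+1)*dt"
    and gx: "\<bar>x2-x1\<bar> \<le> C*h" and gy: "\<bar>y2-y1\<bar> \<le> C*h"
    and gX: "\<bar>X2-X1\<bar> \<le> (C+1)*h" and gY: "\<bar>Y2-Y1\<bar> \<le> (C+1)*h"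
    and q1: "3*X1 \<le> 4*q1" "q1 \<le> C+\<epsilon>/2" and q2: "3*X2 \<le> 4*q2" "q2 \<le> C+\<epsilon>/2"
  shows "(q1+q2)/2 * ((Fs x2 y2 - Fs X2 Y2) - (Fs x1 y1 - Fs X1 Y1))
           * (((x2-X2)+(y2-Y2)) - ((x1-X1)+(y1-Y1)))
         - (((x2-X2)+(y2-Y2)) - ((x1-X1)+(y1-Y1)))^2/4
       \<ge> - Kface \<epsilon> C lam2 * h^2 * ((x1-X1)^2+(y1-Y1)^2+(x2-X2)^2+(y2-Y2)^2)"
proof -
  define cc where "cc = \<epsilon>/2"
  define MM where "MM = (C+1)*lam2"
  define Q0 where "Q0 = C + \<epsilon>/2"
  define Ka where "Ka = MM*(1/cc^2 + MM/cc^3)"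
  define K2 where "K2 = 2*Ka + (LA cc MM + LB cc MM)*(C+1)"
  define del where "del = \<epsilon>/20"
  define K0 where "K0 = (4*C+2)^2*(Q0*GG cc MM + 1/4)"
  have Kdef: "Kface \<epsilon> C lam2 = 16*Q0^2*K2^2 + 4*K0/del^2 + 1"
    unfolding Kface_def Let_def cc_def MM_def Q0_def Ka_def K2_def del_def K0_def by simp
  define T where "T = (Fs x2 y2 - Fs X2 Y2) - (Fs x1 y1 - Fs X1 Y1)"
  define s where "s = ((x2-X2)+(y2-Y2)) - ((x1-X1)+(y1-Y1))"
  define E where "E = \<bar>x1-X1\<bar> + \<bar>x2-X2\<bar> + \<bar>y1-Y1\<bar> + \<bar>y2-Y2\<bar>"
  define Sg where "Sg = (x1-X1)^2+(y1-Y1)^2+(x2-X2)^2+(y2-Y2)^2"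
  define rho where "rho = (q1+q2)/2"
  have cc0: "cc > 0" using eps cc_def by simp
  have MM0: "MM > 0" using C lam MM_def by simp
  have Q00: "Q0 > 0" using C eps Q0_def by simp
  have del0: "del > 0" using eps del_def by simp
  have E0: "E \<ge> 0" unfolding E_def by simp
  have Sg0: "Sg \<ge> 0" unfolding Sg_def by simp
  have ESg: "E^2 \<le> 4*Sg" unfolding E_def Sg_def using sq4[of "x1-X1" "x2-X2" "y1-Y1" "y2-Y2"] by simp
  have rho0a: "rho \<ge> 0" using q1 q2 X1 X2 eps unfolding rho_def by argo
  have rho0b: "rho \<le> Q0" using q1 q2 unfolding rho_def Q0_def by argo
  note rho0 = rho0a rho0b
  have Ch: "(C+1)*h \<le> \<epsilon>/40"
    using h C by (simp add: field_simps)
  have Cdt: "C*dt \<le> MM*h"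
  proof -
    have "C*dt \<le> C*(lam2*h)" using dt C by (simp add: mult_left_mono)
    also have "\<dots> \<le> (C+1)*(lam2*h)" using lam h by (simp add: mult_right_mono)
    finally show ?thesis unfolding MM_def by (simp add: mult.assoc)
  qed
  have C1dt: "(C+1)*dt \<le> MM*h"
    using dt C unfolding MM_def by (metis mult.assoc mult_left_mono add_pos_pos less_le zero_less_one)
  have MMh: "MM*h \<le> MM" using MM0 h by simp
  obtain \<xi> where xi: "0 \<le> \<xi>" "\<xi> \<le> 1" and mvt:
    "T = gA (x1+\<xi>*(x2-x1)) ((x1+\<xi>*(x2-x1)) - (y1+\<xi>*(y2-y1))) * (x2-x1)
    + gB (x1+\<xi>*(x2-x1)) ((x1+\<xi>*(x2-x1)) - (y1+\<xi>*(y2-y1))) * (y2-y1)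
    - gA (X1+\<xi>*(X2-X1)) ((X1+\<xi>*(X2-X1)) - (Y1+\<xi>*(Y2-Y1))) * (X2-X1)
    - gB (X1+\<xi>*(X2-X1)) ((X1+\<xi>*(X2-X1)) - (Y1+\<xi>*(Y2-Y1))) * (Y2-Y1)"
    using mvt_T[of x1 x2 X1 X2 y2 Y2 y1 Y1] x1 x2 X1 X2 eps unfolding T_def by auto
  define xx where "xx = x1+\<xi>*(x2-x1)"
  define dd where "dd = (x1+\<xi>*(x2-x1)) - (y1+\<xi>*(y2-y1))"
  define XX where "XX = X1+\<xi>*(X2-X1)"
  define DD where "DD = (X1+\<xi>*(X2-X1)) - (Y1+\<xi>*(Y2-Y1))"
  define A where "A = gA xx dd"
  define B where "B = gB xx dd"
  define A' where "A' = gA XX DD"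
  define B' where "B' = gB XX DD"
  have Teq: "T = A*(x2-x1) + B*(y2-y1) - A'*(X2-X1) - B'*(Y2-Y1)"
    using mvt unfolding A_def B_def A'_def B'_def xx_def dd_def XX_def DD_def by simp
  have xxc: "xx \<ge> cc" unfolding xx_def cc_def using cvx_ge[of \<epsilon> x1 x2 \<xi>] x1 x2 xi eps by simp
  have XXc: "XX \<ge> cc" unfolding XX_def cc_def using cvx_ge[of "\<epsilon>/2" X1 X2 \<xi>] X1 X2 xi by simp
  have dde: "dd = (x1-y1) + \<xi>*((x2-y2)-(x1-y1))" unfolding dd_def by (simp add: algebra_simps)
  have DDe: "DD = (X1-Y1) + \<xi>*((X2-Y2)-(X1-Y1))" unfolding DD_def by (simp add: algebra_simps)
  have ddb: "\<bar>dd\<bar> \<le> MM*h" using cvx_abs[OF d1 d2 xi] Cdt unfolding dde by linarith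
  have DDb: "\<bar>DD\<bar> \<le> MM*h" using cvx_abs[OF D1 D2 xi] C1dt unfolding DDe by linarith
  have ddM: "\<bar>dd\<bar> \<le> MM" "\<bar>DD\<bar> \<le> MM" using ddb DDb MMh by linarith+
  have xXe: "xx - XX = (x1-X1) + \<xi>*((x2-X2)-(x1-X1))" unfolding xx_def XX_def by (simp add: algebra_simps)
  have xXb: "\<bar>xx - XX\<bar> \<le> E" using cvx_abs2[OF xi, of "x1-X1" "x2-X2"] unfolding xXe E_def by linarith
  have dDe: "dd - DD = ((x1-X1)-(y1-Y1)) + \<xi>*(((x2-X2)-(y2-Y2))-((x1-X1)-(y1-Y1)))"
    unfolding dd_def DD_def by (simp add: algebra_simps)
  have dDb: "\<bar>dd - DD\<bar> \<le> E" using cvx_abs2[OF xi, of "(x1-X1)-(y1-Y1)" "(x2-X2)-(y2-Y2)"]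
    unfolding dDe E_def by linarith
  have lipA: "\<bar>A - A'\<bar> \<le> LA cc MM * E" and lipB: "\<bar>B - B'\<bar> \<le> LB cc MM * E"
    using gAB_lip[OF cc0 xxc XXc ddM xXb dDb] unfolding A_def A'_def B_def B'_def by auto
  have bA: "\<bar>A\<bar> \<le> GG cc MM" "\<bar>B\<bar> \<le> GG cc MM" "\<bar>A'\<bar> \<le> GG cc MM" "\<bar>B'\<bar> \<le> GG cc MM"
    using gAB_bnd(1,2)[OF cc0 xxc ddM(1)] gAB_bnd(1,2)[OF cc0 XXc ddM(2)]
    unfolding A_def A'_def B_def B'_def by auto
  have a1b0: "\<bar>A - 1/(2*xx)\<bar> \<le> \<bar>dd\<bar> * (1/cc^2 + MM/cc^3)"
    "\<bar>B - 1/(2*xx)\<bar> \<le> \<bar>dd\<bar> * (1/cc^2)"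
    using gAB_bnd(3,4)[OF cc0 xxc ddM(1)] unfolding A_def B_def by auto
  have k1: "0 \<le> 1/cc^2" "0 \<le> MM/cc^3" using cc0 MM0 by auto
  have a1b: "\<bar>A - 1/(2*xx)\<bar> \<le> Ka*h"
  proof -
    have "\<bar>dd\<bar> * (1/cc^2 + MM/cc^3) \<le> (MM*h) * (1/cc^2 + MM/cc^3)"
      using ddb k1 by (intro mult_right_mono) auto
    thus ?thesis using a1b0 unfolding Ka_def by (simp add: algebra_simps)
  qed
  have b1b: "\<bar>B - 1/(2*xx)\<bar> \<le> Ka*h"
  proof -
    have "\<bar>dd\<bar> * (1/cc^2) \<le> (MM*h) * (1/cc^2 + MM/cc^3)"
      using ddb k1 by (intro mult_mono) auto
    thus ?thesis using a1b0 unfolding Ka_def by (simp add: algebra_simps)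
  qed
  have LA0: "LA cc MM \<ge> 0" "LB cc MM \<ge> 0" "GG cc MM \<ge> 0"
    using cc0 MM0 unfolding LA_def LB_def GG_def by auto
  have Ka0: "Ka \<ge> 0" using MM0 k1 unfolding Ka_def by simp
  have K20: "K2 \<ge> 0" using Ka0 LA0 C unfolding K2_def by simp
  have K00: "K0 \<ge> 0" using Q00 LA0 unfolding K0_def by simp
  have seq: "s = (x2-x1) + (y2-y1) - (X2-X1) - (Y2-Y1)" unfolding s_def by simp
  have goal_eq: "(q1+q2)/2 * ((Fs x2 y2 - Fs X2 Y2) - (Fs x1 y1 - Fs X1 Y1))
           * (((x2-X2)+(y2-Y2)) - ((x1-X1)+(y1-Y1)))
         - (((x2-X2)+(y2-Y2)) - ((x1-X1)+(y1-Y1)))^2/4 = rho*T*s - s^2/4"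
    unfolding rho_def T_def s_def by simp
  have rhs_eq: "- Kface \<epsilon> C lam2 * h^2 * ((x1-X1)^2+(y1-Y1)^2+(x2-X2)^2+(y2-Y2)^2)
     = - Kface \<epsilon> C lam2 * (h^2 * Sg)" unfolding Sg_def by simp
  have hS0: "h^2 * Sg \<ge> 0" using Sg0 by simp
  have main: "rho*T*s - s^2/4 \<ge> - Kface \<epsilon> C lam2 * (h^2 * Sg)"
  proof (cases "E < del")
    case True
    define k where "k = 1/(2*xx)"
    define R where "R = (A - k)*((x2-X2)-(x1-X1)) + (B - k)*((y2-Y2)-(y1-Y1))
        + (A-A')*(X2-X1) + (B-B')*(Y2-Y1)"
    have TR: "T = k*s + R" unfolding Teq R_def s_def by (simp add: algebra_simps)
    have De: "\<bar>(x2-X2)-(x1-X1)\<bar> \<le> E" "\<bar>(y2-Y2)-(y1-Y1)\<bar> \<le> E" unfolding E_def by linarith+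
    have r1: "\<bar>(A - k)*((x2-X2)-(x1-X1))\<bar> \<le> (Ka*h)*E"
      unfolding abs_mult k_def using a1b De(1) Ka0 h by (intro mult_mono) auto
    have r2: "\<bar>(B - k)*((y2-Y2)-(y1-Y1))\<bar> \<le> (Ka*h)*E"
      unfolding abs_mult k_def using b1b De(2) Ka0 h by (intro mult_mono) auto
    have r3: "\<bar>(A-A')*(X2-X1)\<bar> \<le> (LA cc MM * E)*((C+1)*h)"
      unfolding abs_mult using lipA gX LA0 E0 by (intro mult_mono) auto
    have r4: "\<bar>(B-B')*(Y2-Y1)\<bar> \<le> (LB cc MM * E)*((C+1)*h)"
      unfolding abs_mult using lipB gY LA0 E0 by (intro mult_mono) auto
    have Rb: "\<bar>R\<bar> \<le> K2*h*E"
    proof -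
      have "\<bar>R\<bar> \<le> (Ka*h)*E + (Ka*h)*E + (LA cc MM * E)*((C+1)*h) + (LB cc MM * E)*((C+1)*h)"
        unfolding R_def using r1 r2 r3 r4 by linarith
      also have "\<dots> = K2*h*E" unfolding K2_def by (simp add: algebra_simps)
      finally show ?thesis .
    qed
    have XXb: "XX \<le> X1 + (C+1)*h" "XX \<le> X2 + (C+1)*h"
    proof -
      have "\<bar>\<xi>*(X2-X1)\<bar> \<le> \<bar>X2-X1\<bar>" by (rule tabs[OF xi])
      thus "XX \<le> X1 + (C+1)*h" unfolding XX_def using gX by linarith
      have "0 \<le> 1-\<xi>" "1-\<xi> \<le> 1" using xi by auto
      hence "\<bar>(1-\<xi>)*(X1-X2)\<bar> \<le> \<bar>X1-X2\<bar>" by (rule tabs)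
      moreover have "XX = X2 + (1-\<xi>)*(X1-X2)" unfolding XX_def by (simp add: algebra_simps)
      ultimately show "XX \<le> X2 + (C+1)*h" using gX by (simp add: abs_minus_commute)
    qed
    have xxpos: "xx > 0" using xxc cc0 by linarith
    have r8: "8*rho \<ge> 5*xx"
      using xXb True XXb q1 q2 X1 X2 Ch eps unfolding rho_def del_def by argo
    have rr: "rho/(2*xx) - 1/4 \<ge> 1/16"
    proof -
      have "rho/(2*xx) \<ge> 5/16" using r8 xxpos by (simp add: field_simps)
      thus ?thesis by simp
    qed
    have ex0: "rho*T*s - s^2/4 = (rho*k - 1/4)*s^2 + rho*R*s"
      unfolding TR by (simp add: algebra_simps power2_eq_square)
    have ex: "rho*T*s - s^2/4 = (rho/(2*xx) - 1/4)*s^2 + rho*R*s"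
      using ex0 unfolding k_def by simp
    have p1: "(rho/(2*xx) - 1/4)*s^2 \<ge> (1/16)*s^2" using rr by (intro mult_right_mono) auto
    define w where "w = Q0*K2*h*E"
    have w0: "w \<ge> 0" unfolding w_def using Q00 K20 h E0 by simp
    have p2: "\<bar>rho*R*s\<bar> \<le> w*\<bar>s\<bar>"
    proof -
      have "\<bar>rho*R\<bar> \<le> Q0*(K2*h*E)" unfolding abs_mult using rho0 Rb Q00 by (intro mult_mono) auto
      hence "\<bar>rho*R\<bar>*\<bar>s\<bar> \<le> (Q0*(K2*h*E))*\<bar>s\<bar>" by (intro mult_right_mono) auto
      thus ?thesis unfolding w_def by (simp add: abs_mult mult.assoc)
    qed
    have p3: "(1/16)*s^2 - w*\<bar>s\<bar> \<ge> -4*w^2"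
    proof -
      have "0 \<le> (\<bar>s\<bar>/4 - 2*w)^2" by simp
      thus ?thesis by (simp add: power2_eq_square algebra_simps)
    qed
    have p4: "4*w^2 \<le> 16*Q0^2*K2^2*(h^2*Sg)"
    proof -
      have "4*w^2 = 4*(Q0^2*K2^2*h^2)*E^2" unfolding w_def by (simp add: power_mult_distrib)
      also have "\<dots> \<le> 4*(Q0^2*K2^2*h^2)*(4*Sg)" using ESg by (intro mult_left_mono) auto
      finally show ?thesis by (simp add: algebra_simps)
    qed
    have p5: "16*Q0^2*K2^2*(h^2*Sg) \<le> Kface \<epsilon> C lam2 * (h^2*Sg)"
      unfolding Kdef using hS0 K00 del0 by (intro mult_right_mono) auto
    show ?thesis using ex p1 p2 p3 p4 p5 by linarith
  next
    case False
    hence Ed: "E \<ge> del" by simp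
    have tA: "\<bar>A*(x2-x1)\<bar> \<le> GG cc MM * (C*h)" unfolding abs_mult using bA gx LA0 by (intro mult_mono) auto
    have tB: "\<bar>B*(y2-y1)\<bar> \<le> GG cc MM * (C*h)" unfolding abs_mult using bA gy LA0 by (intro mult_mono) auto
    have tA': "\<bar>A'*(X2-X1)\<bar> \<le> GG cc MM * ((C+1)*h)" unfolding abs_mult using bA gX LA0 by (intro mult_mono) auto
    have tB': "\<bar>B'*(Y2-Y1)\<bar> \<le> GG cc MM * ((C+1)*h)" unfolding abs_mult using bA gY LA0 by (intro mult_mono) auto
    have Tb: "\<bar>T\<bar> \<le> GG cc MM*((4*C+2)*h)"
    proof -
      have "\<bar>T\<bar> \<le> GG cc MM * (C*h) + GG cc MM * (C*h) + GG cc MM * ((C+1)*h) + GG cc MM * ((C+1)*h)"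
        unfolding Teq using tA tB tA' tB' by linarith
      also have "\<dots> = GG cc MM*((4*C+2)*h)" by (simp add: algebra_simps)
      finally show ?thesis .
    qed
    have sb: "\<bar>s\<bar> \<le> (4*C+2)*h"
    proof -
      have "\<bar>s\<bar> \<le> C*h + C*h + (C+1)*h + (C+1)*h" unfolding seq using gx gy gX gY by linarith
      thus ?thesis by (simp add: algebra_simps)
    qed
    have s2: "s^2 \<le> ((4*C+2)*h)^2"
    proof -
      have "\<bar>s\<bar>^2 \<le> ((4*C+2)*h)^2" using sb by (intro power_mono) auto
      thus ?thesis by simp
    qed
    have pr: "\<bar>rho*T*s\<bar> \<le> Q0*(GG cc MM*((4*C+2)*h))*((4*C+2)*h)"
      unfolding abs_mult using rho0 Tb sb Q00 LA0 h C
      by (intro mult_mono) (auto intro!: mult_nonneg_nonneg)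
    have K0h: "Q0*(GG cc MM*((4*C+2)*h))*((4*C+2)*h) + ((4*C+2)*h)^2/4 = K0*h^2"
      unfolding K0_def by (simp add: algebra_simps power2_eq_square)
    have lb: "rho*T*s - s^2/4 \<ge> - (K0*h^2)" using pr s2 K0h by linarith
    have E2: "del^2 \<le> 4*Sg"
    proof -
      have "del^2 \<le> E^2" using Ed del0 by (intro power_mono) auto
      thus ?thesis using ESg by linarith
    qed
    have q: "K0*h^2 \<le> 4*K0/del^2 * (h^2*Sg)"
    proof -
      have "K0*h^2 * del^2 \<le> K0*h^2*(4*Sg)" using E2 K00 by (intro mult_left_mono) auto
      hence "K0*h^2 \<le> K0*h^2*(4*Sg) / del^2" using del0 by (simp add: field_simps)
      thus ?thesis by (simp add: algebra_simps)
    qed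
    have q2: "4*K0/del^2 * (h^2*Sg) \<le> Kface \<epsilon> C lam2 * (h^2*Sg)"
      unfolding Kdef using hS0 by (intro mult_right_mono) auto
    show ?thesis using lb q q2 by linarith
  qed
  show ?thesis unfolding goal_eq rhs_eq using main by simp
qed



lemma Kface_pos: assumes "\<epsilon> > 0" "C > 0" "lam2 > 0" shows "Kface \<epsilon> C lam2 > 0"
proof -
  have "GG (\<epsilon>/2) ((C+1)*lam2) \<ge> 0" using assms unfolding GG_def by auto
  hence "(4*C+2)^2*((C + \<epsilon>/2)*GG (\<epsilon>/2) ((C+1)*lam2) + 1/4) \<ge> 0" using assms by auto
  hence "4*((4*C+2)^2*((C + \<epsilon>/2)*GG (\<epsilon>/2) ((C+1)*lam2) + 1/4))/(\<epsilon>/20)^2 \<ge> 0" by simp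
  thus ?thesis unfolding Kface_def Let_def
    by (smt (verit) zero_le_power2 mult_nonneg_nonneg)
qed

definition S3 :: "nat \<Rightarrow> grid \<Rightarrow> real" where
  "S3 N f = (\<Sum>i\<in>{1..N}. \<Sum>j\<in>{1..N}. \<Sum>k\<in>{1..N}. f i j k)"

lemma S3_add: "S3 N (\<lambda>i j k. f i j k + g i j k) = S3 N f + S3 N g"
  unfolding S3_def by (simp add: sum.distrib)
lemma S3_cmult: "S3 N (\<lambda>i j k. c * f i j k) = c * S3 N f"
  unfolding S3_def by (simp add: sum_distrib_left)
lemma S3_mono: "on_cells N (\<lambda>i j k. f i j k \<le> g i j k) \<Longrightarrow> S3 N f \<le> S3 N g"
  unfolding S3_def on_cells_def by (intro sum_mono) auto
lemma ip1: "ip h N f (\<lambda>i j k. 1) = h^3 * S3 N f"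
  unfolding ip_def S3_def by simp
lemma ip_sq: "ip h N f f = h^3 * S3 N (\<lambda>i j k. (f i j k)^2)"
  unfolding ip_def S3_def by (simp add: power2_eq_square)

lemma cl_range: "1 \<le> N \<Longrightarrow> cl N i \<in> {1..N}" unfolding cl_def by auto
lemma cl_id: "i \<in> {1..N} \<Longrightarrow> cl N i = i" unfolding cl_def by auto

lemma on_cells_ext: "on_cells N P \<Longrightarrow> 1 \<le> N \<Longrightarrow> P (cl N i) (cl N j) (cl N k)"
  unfolding on_cells_def using cl_range by blast

lemma shift_suc:
  fixes g :: "nat \<Rightarrow> real"
  assumes N: "1 \<le> N" and g: "\<And>i. i \<in> {1..N} \<Longrightarrow> g i \<ge> 0"
  shows "(\<Sum>i\<in>{1..N}. g (cl N (Suc i))) \<le> 2 * (\<Sum>i\<in>{1..N}. g i)"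
proof -
  have split: "{1..N} = insert N {1..<N}" using N by auto
  have "(\<Sum>i\<in>{1..N}. g (cl N (Suc i))) = g (cl N (Suc N)) + (\<Sum>i\<in>{1..<N}. g (cl N (Suc i)))"
    unfolding split by (simp add: sum.insert)
  also have "g (cl N (Suc N)) = g N" unfolding cl_def using N by (simp add: max_def)
  also have "(\<Sum>i\<in>{1..<N}. g (cl N (Suc i))) = (\<Sum>i\<in>{1..<N}. g (Suc i))"
    by (rule sum.cong) (auto simp: cl_def)
  also have "\<dots> = (\<Sum>i\<in>Suc ` {1..<N}. g i)" by (subst sum.reindex) (auto simp only: comp_def inj_Suc inj_on_def)
  also have "\<dots> \<le> (\<Sum>i\<in>{1..N}. g i)" using g by (intro sum_mono2) auto
  also have "g N \<le> (\<Sum>i\<in>{1..N}. g i)" using g N by (intro member_le_sum) auto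
  finally show ?thesis by linarith
qed

lemma shift_pred:
  fixes g :: "nat \<Rightarrow> real"
  assumes N: "1 \<le> N" and g: "\<And>i. i \<in> {1..N} \<Longrightarrow> g i \<ge> 0"
  shows "(\<Sum>i\<in>{1..N}. g (cl N (i - 1))) \<le> 2 * (\<Sum>i\<in>{1..N}. g i)"
proof -
  have split: "{1..N} = insert 1 {2..N}" using N by auto
  have "(\<Sum>i\<in>{1..N}. g (cl N (i - 1))) = g (cl N 0) + (\<Sum>i\<in>{2..N}. g (cl N (i - 1)))"
    unfolding split by (simp add: sum.insert)
  also have "g (cl N 0) = g 1" unfolding cl_def using N by simp
  also have "(\<Sum>i\<in>{2..N}. g (cl N (i - 1))) = (\<Sum>i\<in>{2..N}. g (i - 1))"
    by (rule sum.cong) (auto simp: cl_def)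
  also have "\<dots> = (\<Sum>i\<in>(\<lambda>i. i - 1) ` {2..N}. g i)"
    by (subst sum.reindex) (auto simp: inj_on_def)
  also have "\<dots> \<le> (\<Sum>i\<in>{1..N}. g i)" using g by (intro sum_mono2) auto
  also have "g 1 \<le> (\<Sum>i\<in>{1..N}. g i)" using g N by (intro member_le_sum) auto
  finally show ?thesis by linarith
qed

lemma shift_id:
  fixes g :: "nat \<Rightarrow> real"
  shows "(\<Sum>i\<in>{1..N}. g (cl N i)) = (\<Sum>i\<in>{1..N}. g i)"
  by (rule sum.cong) (auto simp: cl_def)

lemma resc:
  fixes h q1 q2 T s K S :: real
  assumes h: "h > 0" and L: "(q1+q2)/2*T*s - s^2/4 \<ge> -K*h^2*S"
  shows "(q2+q1)/2*(T/h)*(s/h) - (s/h)*(s/h)/4 \<ge> -K*S"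
proof -
  have e: "(q2+q1)/2*(T/h)*(s/h) - (s/h)*(s/h)/4 = ((q1+q2)/2*T*s - s^2/4)/h^2"
    using h by (simp add: field_simps power2_eq_square)
  have "(-K*h^2*S)/h^2 \<le> ((q1+q2)/2*T*s - s^2/4)/h^2" using L h by (intro divide_right_mono) auto
  moreover have "(-K*h^2*S)/h^2 = -K*S" using h by simp
  ultimately show ?thesis unfolding e by simp
qed

lemma face_generic:
  fixes \<epsilon> C lam2 h dt :: real and N :: nat and rc0 rc1 r0 r1 rh :: grid and a1 b1 c1 a2 b2 c2 :: nat
  assumes eps: "\<epsilon> > 0" and C: "C > 0" and lam: "lam2 > 0"
    and h: "0 < h" "h \<le> 1" "h \<le> \<epsilon>/(40*(C+1))" and dt: "dt \<le> lam2*h" and N: "1 \<le> N"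
    and Hrc1: "on_cells N (\<lambda>i j k. \<epsilon> \<le> rc1 i j k \<and> rc1 i j k \<le> C)"
    and Hr1: "on_cells N (\<lambda>i j k. \<epsilon> / 2 \<le> r1 i j k \<and> r1 i j k \<le> C + \<epsilon> / 2)"
    and Hd: "sup_le N (\<lambda>i j k. rc1 i j k - rc0 i j k) (C * dt)"
    and HD: "sup_le N (\<lambda>i j k. r1 i j k - r0 i j k) ((C + 1) * dt)"
    and Hrh: "on_cells N (\<lambda>i j k. \<epsilon> / 2 \<le> rh i j k \<and> rh i j k \<le> C + \<epsilon> / 2)"
    and Hrat: "on_cells N (\<lambda>i j k. 3 / 4 \<le> rh i j k / r1 i j k \<and> rh i j k / r1 i j k \<le> 5 / 4)"
    and g1: "\<bar>ext N rc1 a2 b2 c2 - ext N rc1 a1 b1 c1\<bar> \<le> C*h"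
    and g2: "\<bar>ext N rc0 a2 b2 c2 - ext N rc0 a1 b1 c1\<bar> \<le> C*h"
    and g3: "\<bar>ext N r1 a2 b2 c2 - ext N r1 a1 b1 c1\<bar> \<le> (C+1)*h"
    and g4: "\<bar>ext N r0 a2 b2 c2 - ext N r0 a1 b1 c1\<bar> \<le> (C+1)*h"
  shows "(ext N rh a2 b2 c2 + ext N rh a1 b1 c1)/2
      * ((ext N (\<lambda>i j k. Sfun rc1 rc0 i j k - Sfun r1 r0 i j k) a2 b2 c2
          - ext N (\<lambda>i j k. Sfun rc1 rc0 i j k - Sfun r1 r0 i j k) a1 b1 c1)/h)
      * ((ext N (\<lambda>i j k. (rc1 i j k - r1 i j k) + (rc0 i j k - r0 i j k)) a2 b2 c2
          - ext N (\<lambda>i j k. (rc1 i j k - r1 i j k) + (rc0 i j k - r0 i j k)) a1 b1 c1)/h)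
    - ((ext N (\<lambda>i j k. (rc1 i j k - r1 i j k) + (rc0 i j k - r0 i j k)) a2 b2 c2
          - ext N (\<lambda>i j k. (rc1 i j k - r1 i j k) + (rc0 i j k - r0 i j k)) a1 b1 c1)/h)
     * ((ext N (\<lambda>i j k. (rc1 i j k - r1 i j k) + (rc0 i j k - r0 i j k)) a2 b2 c2
          - ext N (\<lambda>i j k. (rc1 i j k - r1 i j k) + (rc0 i j k - r0 i j k)) a1 b1 c1)/h) / 4
    \<ge> - Kface \<epsilon> C lam2 * (ext N (\<lambda>i j k. (rc1 i j k - r1 i j k)^2 + (rc0 i j k - r0 i j k)^2) a1 b1 c1
                            + ext N (\<lambda>i j k. (rc1 i j k - r1 i j k)^2 + (rc0 i j k - r0 i j k)^2) a2 b2 c2)"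
proof -
  define x1 where "x1 = ext N rc1 a1 b1 c1"
  define x2 where "x2 = ext N rc1 a2 b2 c2"
  define y1 where "y1 = ext N rc0 a1 b1 c1"
  define y2 where "y2 = ext N rc0 a2 b2 c2"
  define X1 where "X1 = ext N r1 a1 b1 c1"
  define X2 where "X2 = ext N r1 a2 b2 c2"
  define Y1 where "Y1 = ext N r0 a1 b1 c1"
  define Y2 where "Y2 = ext N r0 a2 b2 c2"
  define q1 where "q1 = ext N rh a1 b1 c1"
  define q2 where "q2 = ext N rh a2 b2 c2"
  have eS: "ext N (\<lambda>i j k. Sfun rc1 rc0 i j k - Sfun r1 r0 i j k) a b c
     = Fs (ext N rc1 a b c) (ext N rc0 a b c) - Fs (ext N r1 a b c) (ext N r0 a b c)" for a b c
    by (simp add: ext_def Sfun_def Fs_def)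
  have esg: "ext N (\<lambda>i j k. (rc1 i j k - r1 i j k) + (rc0 i j k - r0 i j k)) a b c
     = (ext N rc1 a b c - ext N r1 a b c) + (ext N rc0 a b c - ext N r0 a b c)" for a b c
    by (simp add: ext_def)
  have eQ: "ext N (\<lambda>i j k. (rc1 i j k - r1 i j k)^2 + (rc0 i j k - r0 i j k)^2) a b c
     = (ext N rc1 a b c - ext N r1 a b c)^2 + (ext N rc0 a b c - ext N r0 a b c)^2" for a b c
    by (simp add: ext_def)
  have P1: "\<epsilon> \<le> ext N rc1 a b c \<and> ext N rc1 a b c \<le> C" for a b c
    using on_cells_ext[OF Hrc1 N] unfolding ext_def by blast
  have P2: "\<epsilon>/2 \<le> ext N r1 a b c \<and> ext N r1 a b c \<le> C + \<epsilon>/2" for a b c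
    using on_cells_ext[OF Hr1 N] unfolding ext_def by blast
  have P3: "\<bar>ext N rc1 a b c - ext N rc0 a b c\<bar> \<le> C*dt" for a b c
    using on_cells_ext[OF Hd[unfolded sup_le_def] N] unfolding ext_def by blast
  have P4: "\<bar>ext N r1 a b c - ext N r0 a b c\<bar> \<le> (C+1)*dt" for a b c
    using on_cells_ext[OF HD[unfolded sup_le_def] N] unfolding ext_def by blast
  have P5: "ext N rh a b c \<le> C + \<epsilon>/2" for a b c
    using on_cells_ext[OF Hrh N] unfolding ext_def by blast
  have P6: "3 * ext N r1 a b c \<le> 4 * ext N rh a b c" for a b c
  proof -
    have "3/4 \<le> ext N rh a b c / ext N r1 a b c"
      using on_cells_ext[OF Hrat N] unfolding ext_def by blast
    moreover have "ext N r1 a b c > 0" using P2[of a b c] eps by linarith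
    ultimately show ?thesis by (simp add: field_simps)
  qed
  have FB: "(q1+q2)/2 * ((Fs x2 y2 - Fs X2 Y2) - (Fs x1 y1 - Fs X1 Y1))
           * (((x2-X2)+(y2-Y2)) - ((x1-X1)+(y1-Y1)))
         - (((x2-X2)+(y2-Y2)) - ((x1-X1)+(y1-Y1)))^2/4
       \<ge> - Kface \<epsilon> C lam2 * h^2 * ((x1-X1)^2+(y1-Y1)^2+(x2-X2)^2+(y2-Y2)^2)"
    apply (rule face_bound[OF eps C lam h dt])
    using P1 P2 P3 P4 P5 P6 g1 g2 g3 g4
    unfolding x1_def x2_def y1_def y2_def X1_def X2_def Y1_def Y2_def q1_def q2_def
    by (auto simp: abs_minus_commute)
  have R: "(q2+q1)/2 * (((Fs x2 y2 - Fs X2 Y2) - (Fs x1 y1 - Fs X1 Y1))/h)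
           * ((((x2-X2)+(y2-Y2)) - ((x1-X1)+(y1-Y1)))/h)
         - ((((x2-X2)+(y2-Y2)) - ((x1-X1)+(y1-Y1)))/h) * ((((x2-X2)+(y2-Y2)) - ((x1-X1)+(y1-Y1)))/h)/4
       \<ge> - Kface \<epsilon> C lam2 * ((x1-X1)^2+(y1-Y1)^2+(x2-X2)^2+(y2-Y2)^2)"
    by (rule resc[OF h(1) FB])
  show ?thesis unfolding eS esg eQ
    using R unfolding x1_def x2_def y1_def y2_def X1_def X2_def Y1_def Y2_def q1_def q2_def
    by (simp add: algebra_simps)
qed

lemma S3_cong: "on_cells N (\<lambda>i j k. f i j k = g i j k) \<Longrightarrow> S3 N f = S3 N g"
  unfolding S3_def on_cells_def by (intro sum.cong) auto

definition Psh :: "nat \<Rightarrow> (nat \<Rightarrow> nat) \<Rightarrow> bool" where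
  "Psh N \<sigma> = ((\<forall>i. \<sigma> i \<in> {1..N}) \<and> (\<forall>g::nat\<Rightarrow>real. (\<forall>i\<in>{1..N}. 0 \<le> g i) \<longrightarrow>
      (\<Sum>i\<in>{1..N}. g (\<sigma> i)) \<le> 2 * (\<Sum>i\<in>{1..N}. g i)))"

lemma Psh_suc: "1 \<le> N \<Longrightarrow> Psh N (\<lambda>i. cl N (Suc i))"
  unfolding Psh_def using shift_suc cl_range by blast
lemma Psh_pred: "1 \<le> N \<Longrightarrow> Psh N (\<lambda>i. cl N (i - 1))"
  unfolding Psh_def using shift_pred cl_range by blast
lemma Psh_id: assumes "1 \<le> N" shows "Psh N (\<lambda>i. cl N i)"
  unfolding Psh_def
proof (intro conjI allI impI)
  show "cl N i \<in> {1..N}" for i using cl_range[OF assms] .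
  fix g :: "nat \<Rightarrow> real" assume g: "\<forall>i\<in>{1..N}. 0 \<le> g i"
  have "0 \<le> (\<Sum>i\<in>{1..N}. g i)" using g by (intro sum_nonneg) auto
  thus "(\<Sum>i\<in>{1..N}. g (cl N i)) \<le> 2 * (\<Sum>i\<in>{1..N}. g i)" unfolding shift_id by simp
qed

lemma S3x: assumes P: "Psh N \<sigma>" and Q: "on_cells N (\<lambda>i j k. 0 \<le> Q i j k)"
  shows "S3 N (\<lambda>i j k. Q (\<sigma> i) j k) \<le> 2 * S3 N Q"
proof -
  have H: "\<And>g::nat\<Rightarrow>real. (\<forall>i\<in>{1..N}. 0 \<le> g i) \<Longrightarrow> (\<Sum>i\<in>{1..N}. g (\<sigma> i)) \<le> 2 * (\<Sum>i\<in>{1..N}. g i)"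
    using P unfolding Psh_def by blast
  have "(\<Sum>i\<in>{1..N}. (\<lambda>a. \<Sum>j\<in>{1..N}. \<Sum>k\<in>{1..N}. Q a j k) (\<sigma> i))
      \<le> 2 * (\<Sum>i\<in>{1..N}. (\<lambda>a. \<Sum>j\<in>{1..N}. \<Sum>k\<in>{1..N}. Q a j k) i)"
    apply (rule H) using Q unfolding on_cells_def by (auto intro!: sum_nonneg)
  thus ?thesis unfolding S3_def by simp
qed

lemma S3y: assumes P: "Psh N \<sigma>" and Q: "on_cells N (\<lambda>i j k. 0 \<le> Q i j k)"
  shows "S3 N (\<lambda>i j k. Q i (\<sigma> j) k) \<le> 2 * S3 N Q"
proof -
  have H: "\<And>g::nat\<Rightarrow>real. (\<forall>i\<in>{1..N}. 0 \<le> g i) \<Longrightarrow> (\<Sum>i\<in>{1..N}. g (\<sigma> i)) \<le> 2 * (\<Sum>i\<in>{1..N}. g i)"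
    using P unfolding Psh_def by blast
  have "(\<Sum>i\<in>{1..N}. (\<Sum>j\<in>{1..N}. (\<lambda>b. \<Sum>k\<in>{1..N}. Q i b k) (\<sigma> j)))
      \<le> (\<Sum>i\<in>{1..N}. 2 * (\<Sum>j\<in>{1..N}. (\<lambda>b. \<Sum>k\<in>{1..N}. Q i b k) j))"
  proof (rule sum_mono)
    fix i assume i: "i \<in> {1..N}"
    show "(\<Sum>j\<in>{1..N}. (\<lambda>b. \<Sum>k\<in>{1..N}. Q i b k) (\<sigma> j))
      \<le> 2 * (\<Sum>j\<in>{1..N}. (\<lambda>b. \<Sum>k\<in>{1..N}. Q i b k) j)"
      apply (rule H) using Q i unfolding on_cells_def by (auto intro!: sum_nonneg)
  qed
  thus ?thesis unfolding S3_def by (simp add: sum_distrib_left)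
qed

lemma S3z: assumes P: "Psh N \<sigma>" and Q: "on_cells N (\<lambda>i j k. 0 \<le> Q i j k)"
  shows "S3 N (\<lambda>i j k. Q i j (\<sigma> k)) \<le> 2 * S3 N Q"
proof -
  have H: "\<And>g::nat\<Rightarrow>real. (\<forall>i\<in>{1..N}. 0 \<le> g i) \<Longrightarrow> (\<Sum>i\<in>{1..N}. g (\<sigma> i)) \<le> 2 * (\<Sum>i\<in>{1..N}. g i)"
    using P unfolding Psh_def by blast
  have "(\<Sum>i\<in>{1..N}. \<Sum>j\<in>{1..N}. \<Sum>k\<in>{1..N}. Q i j (\<sigma> k))
      \<le> (\<Sum>i\<in>{1..N}. \<Sum>j\<in>{1..N}. 2 * (\<Sum>k\<in>{1..N}. Q i j k))"
  proof (intro sum_mono)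
    fix i j assume i: "i \<in> {1..N}" and j: "j \<in> {1..N}"
    show "(\<Sum>k\<in>{1..N}. Q i j (\<sigma> k)) \<le> 2 * (\<Sum>k\<in>{1..N}. Q i j k)"
      apply (rule H) using Q i j unfolding on_cells_def by auto
  qed
  thus ?thesis unfolding S3_def by (simp add: sum_distrib_left)
qed

lemma gsl:
  assumes G: "grad_sup_le h N f c" and h: "h > 0"
  shows "\<And>i j k. i\<in>{0..N} \<Longrightarrow> j\<in>{1..N} \<Longrightarrow> k\<in>{1..N} \<Longrightarrow> \<bar>ext N f (Suc i) j k - ext N f i j k\<bar> \<le> c*h"
    "\<And>i j k. i\<in>{1..N} \<Longrightarrow> j\<in>{0..N} \<Longrightarrow> k\<in>{1..N} \<Longrightarrow> \<bar>ext N f i (Suc j) k - ext N f i j k\<bar> \<le> c*h"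
    "\<And>i j k. i\<in>{1..N} \<Longrightarrow> j\<in>{1..N} \<Longrightarrow> k\<in>{0..N} \<Longrightarrow> \<bar>ext N f i j (Suc k) - ext N f i j k\<bar> \<le> c*h"
proof -
  have cv: "\<bar>a - b\<bar> \<le> c*h" if A: "\<bar>(a - b)/h\<bar> \<le> c" for a b
  proof -
    have "\<bar>a-b\<bar>/h \<le> c" using A h by (simp add: abs_divide)
    thus ?thesis using h by (simp add: pos_divide_le_eq)
  qed
  have G': "\<And>i j k. i\<in>{0..N} \<Longrightarrow> j\<in>{1..N} \<Longrightarrow> k\<in>{1..N} \<Longrightarrow>
      \<bar>Dx h N f i j k\<bar> \<le> c \<and> \<bar>Dy h N f j i k\<bar> \<le> c \<and> \<bar>Dz h N f j k i\<bar> \<le> c"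
    using G unfolding grad_sup_le_def by simp
  fix i j k
  show "\<bar>ext N f (Suc i) j k - ext N f i j k\<bar> \<le> c*h" if "i\<in>{0..N}" "j\<in>{1..N}" "k\<in>{1..N}"
    using G'[OF that] unfolding Dx_def by (intro cv) simp
  show "\<bar>ext N f i (Suc j) k - ext N f i j k\<bar> \<le> c*h" if "i\<in>{1..N}" "j\<in>{0..N}" "k\<in>{1..N}"
    using G'[OF that(2,1,3)] unfolding Dy_def by (intro cv) simp
  show "\<bar>ext N f i j (Suc k) - ext N f i j k\<bar> \<le> c*h" if "i\<in>{1..N}" "j\<in>{1..N}" "k\<in>{0..N}"
    using G'[OF that(3,1,2)] unfolding Dz_def by (intro cv) simp
qed

definition Stf :: "grid \<Rightarrow> grid \<Rightarrow> grid \<Rightarrow> grid \<Rightarrow> grid" where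
  "Stf rc1 rc0 r1 r0 = (\<lambda>i j k. Sfun rc1 rc0 i j k - Sfun r1 r0 i j k)"
definition sgf :: "grid \<Rightarrow> grid \<Rightarrow> grid \<Rightarrow> grid \<Rightarrow> grid" where
  "sgf rc1 rc0 r1 r0 = (\<lambda>i j k. (rc1 i j k - r1 i j k) + (rc0 i j k - r0 i j k))"
definition Qf :: "grid \<Rightarrow> grid \<Rightarrow> grid \<Rightarrow> grid \<Rightarrow> grid" where
  "Qf rc1 rc0 r1 r0 = (\<lambda>i j k. (rc1 i j k - r1 i j k)^2 + (rc0 i j k - r0 i j k)^2)"

lemma faces:
  fixes \<epsilon> C lam2 h dt :: real and N :: nat and rc0 rc1 r0 r1 rh :: grid
  assumes eps: "\<epsilon> > 0" and C: "C > 0" and lam: "lam2 > 0"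
    and h: "0 < h" "h \<le> 1" "h \<le> \<epsilon>/(40*(C+1))" and dt: "dt \<le> lam2*h" and N: "1 \<le> N"
    and Hrc1: "on_cells N (\<lambda>i j k. \<epsilon> \<le> rc1 i j k \<and> rc1 i j k \<le> C)"
    and Hr1: "on_cells N (\<lambda>i j k. \<epsilon> / 2 \<le> r1 i j k \<and> r1 i j k \<le> C + \<epsilon> / 2)"
    and Hd: "sup_le N (\<lambda>i j k. rc1 i j k - rc0 i j k) (C * dt)"
    and HD: "sup_le N (\<lambda>i j k. r1 i j k - r0 i j k) ((C + 1) * dt)"
    and Hrh: "on_cells N (\<lambda>i j k. \<epsilon> / 2 \<le> rh i j k \<and> rh i j k \<le> C + \<epsilon> / 2)"
    and Hrat: "on_cells N (\<lambda>i j k. 3 / 4 \<le> rh i j k / r1 i j k \<and> rh i j k / r1 i j k \<le> 5 / 4)"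
    and G1: "grad_sup_le h N rc1 C" and G2: "grad_sup_le h N rc0 C"
    and G3: "grad_sup_le h N r1 (C + 1)" and G4: "grad_sup_le h N r0 (C + 1)"
  defines "St \<equiv> Stf rc1 rc0 r1 r0" and "sg \<equiv> sgf rc1 rc0 r1 r0" and "Q \<equiv> Qf rc1 rc0 r1 r0"
    and "K \<equiv> Kface \<epsilon> C lam2"
  shows "\<And>i j k. i\<in>{0..N} \<Longrightarrow> j\<in>{1..N} \<Longrightarrow> k\<in>{1..N} \<Longrightarrow>
     Ax N rh i j k * Dx h N St i j k * Dx h N sg i j k - Dx h N sg i j k * Dx h N sg i j k / 4
       \<ge> - K * (ext N Q i j k + ext N Q (Suc i) j k)"
   "\<And>i j k. i\<in>{1..N} \<Longrightarrow> j\<in>{0..N} \<Longrightarrow> k\<in>{1..N} \<Longrightarrow>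
     Ay N rh i j k * Dy h N St i j k * Dy h N sg i j k - Dy h N sg i j k * Dy h N sg i j k / 4
       \<ge> - K * (ext N Q i j k + ext N Q i (Suc j) k)"
   "\<And>i j k. i\<in>{1..N} \<Longrightarrow> j\<in>{1..N} \<Longrightarrow> k\<in>{0..N} \<Longrightarrow>
     Az N rh i j k * Dz h N St i j k * Dz h N sg i j k - Dz h N sg i j k * Dz h N sg i j k / 4
       \<ge> - K * (ext N Q i j k + ext N Q i j (Suc k))"
proof -
  note FG = face_generic[OF eps C lam h dt N Hrc1 Hr1 Hd HD Hrh Hrat]
  fix i j k
  show "Ax N rh i j k * Dx h N St i j k * Dx h N sg i j k - Dx h N sg i j k * Dx h N sg i j k / 4
       \<ge> - K * (ext N Q i j k + ext N Q (Suc i) j k)" if i: "i\<in>{0..N}" and j: "j\<in>{1..N}" and k: "k\<in>{1..N}"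
    unfolding Ax_def Dx_def St_def sg_def Q_def K_def Stf_def sgf_def Qf_def
    by (rule FG[OF gsl(1)[OF G1 h(1) i j k] gsl(1)[OF G2 h(1) i j k] gsl(1)[OF G3 h(1) i j k] gsl(1)[OF G4 h(1) i j k]])
  show "Ay N rh i j k * Dy h N St i j k * Dy h N sg i j k - Dy h N sg i j k * Dy h N sg i j k / 4
       \<ge> - K * (ext N Q i j k + ext N Q i (Suc j) k)" if i: "i\<in>{1..N}" and j: "j\<in>{0..N}" and k: "k\<in>{1..N}"
    unfolding Ay_def Dy_def St_def sg_def Q_def K_def Stf_def sgf_def Qf_def
    by (rule FG[OF gsl(2)[OF G1 h(1) i j k] gsl(2)[OF G2 h(1) i j k] gsl(2)[OF G3 h(1) i j k] gsl(2)[OF G4 h(1) i j k]])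
  show "Az N rh i j k * Dz h N St i j k * Dz h N sg i j k - Dz h N sg i j k * Dz h N sg i j k / 4
       \<ge> - K * (ext N Q i j k + ext N Q i j (Suc k))" if i: "i\<in>{1..N}" and j: "j\<in>{1..N}" and k: "k\<in>{0..N}"
    unfolding Az_def Dz_def St_def sg_def Q_def K_def Stf_def sgf_def Qf_def
    by (rule FG[OF gsl(3)[OF G1 h(1) i j k] gsl(3)[OF G2 h(1) i j k] gsl(3)[OF G3 h(1) i j k] gsl(3)[OF G4 h(1) i j k]])
qed

lemma cell_bound:
  fixes \<epsilon> C lam2 h dt :: real and N :: nat and rc0 rc1 r0 r1 rh :: grid
  assumes eps: "\<epsilon> > 0" and C: "C > 0" and lam: "lam2 > 0"
    and h: "0 < h" "h \<le> 1" "h \<le> \<epsilon>/(40*(C+1))" and dt: "dt \<le> lam2*h" and N: "1 \<le> N"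
    and Hrc1: "on_cells N (\<lambda>i j k. \<epsilon> \<le> rc1 i j k \<and> rc1 i j k \<le> C)"
    and Hr1: "on_cells N (\<lambda>i j k. \<epsilon> / 2 \<le> r1 i j k \<and> r1 i j k \<le> C + \<epsilon> / 2)"
    and Hd: "sup_le N (\<lambda>i j k. rc1 i j k - rc0 i j k) (C * dt)"
    and HD: "sup_le N (\<lambda>i j k. r1 i j k - r0 i j k) ((C + 1) * dt)"
    and Hrh: "on_cells N (\<lambda>i j k. \<epsilon> / 2 \<le> rh i j k \<and> rh i j k \<le> C + \<epsilon> / 2)"
    and Hrat: "on_cells N (\<lambda>i j k. 3 / 4 \<le> rh i j k / r1 i j k \<and> rh i j k / r1 i j k \<le> 5 / 4)"
    and G1: "grad_sup_le h N rc1 C" and G2: "grad_sup_le h N rc0 C"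
    and G3: "grad_sup_le h N r1 (C + 1)" and G4: "grad_sup_le h N r0 (C + 1)"
  defines "St \<equiv> Stf rc1 rc0 r1 r0" and "sg \<equiv> sgf rc1 rc0 r1 r0" and "Q \<equiv> Qf rc1 rc0 r1 r0"
    and "K \<equiv> Kface \<epsilon> C lam2"
  assumes i: "i \<in> {1..N}" and j: "j \<in> {1..N}" and k: "k \<in> {1..N}"
  shows "((Ax N rh i j k * Dx h N St i j k * Dx h N sg i j k + Ax N rh (i - 1) j k * Dx h N St (i - 1) j k * Dx h N sg (i - 1) j k) / 2
      + (Ay N rh i j k * Dy h N St i j k * Dy h N sg i j k + Ay N rh i (j - 1) k * Dy h N St i (j - 1) k * Dy h N sg i (j - 1) k) / 2
      + (Az N rh i j k * Dz h N St i j k * Dz h N sg i j k + Az N rh i j (k - 1) * Dz h N St i j (k - 1) * Dz h N sg i j (k - 1)) / 2) - ((Dx h N sg i j k * Dx h N sg i j k + Dx h N sg (i - 1) j k * Dx h N sg (i - 1) j k) / 2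
      + (Dy h N sg i j k * Dy h N sg i j k + Dy h N sg i (j - 1) k * Dy h N sg i (j - 1) k) / 2
      + (Dz h N sg i j k * Dz h N sg i j k + Dz h N sg i j (k - 1) * Dz h N sg i j (k - 1)) / 2) / 4 \<ge> - (K/2) * ((ext N Q i j k + ext N Q (Suc i) j k) + (ext N Q (i - 1) j k + ext N Q i j k)
      + (ext N Q i j k + ext N Q i (Suc j) k) + (ext N Q i (j - 1) k + ext N Q i j k)
      + (ext N Q i j k + ext N Q i j (Suc k)) + (ext N Q i j (k - 1) + ext N Q i j k))"
proof -
  note F = faces[OF eps C lam h dt N Hrc1 Hr1 Hd HD Hrh Hrat G1 G2 G3 G4]
  have i0: "i \<in> {0..N}" "i - 1 \<in> {0..N}" and si: "Suc (i - 1) = i" using i by auto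
  have j0: "j \<in> {0..N}" "j - 1 \<in> {0..N}" and sj: "Suc (j - 1) = j" using j by auto
  have k0: "k \<in> {0..N}" "k - 1 \<in> {0..N}" and sk: "Suc (k - 1) = k" using k by auto
  have a1: "Ax N rh i j k * Dx h N St i j k * Dx h N sg i j k - Dx h N sg i j k * Dx h N sg i j k / 4
       \<ge> - K * (ext N Q i j k + ext N Q (Suc i) j k)"
    using F(1)[OF i0(1) j k] unfolding St_def sg_def Q_def K_def .
  have a2: "Ax N rh (i-1) j k * Dx h N St (i-1) j k * Dx h N sg (i-1) j k - Dx h N sg (i-1) j k * Dx h N sg (i-1) j k / 4
       \<ge> - K * (ext N Q (i-1) j k + ext N Q i j k)"
    using F(1)[OF i0(2) j k] unfolding St_def sg_def Q_def K_def si .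
  have b1: "Ay N rh i j k * Dy h N St i j k * Dy h N sg i j k - Dy h N sg i j k * Dy h N sg i j k / 4
       \<ge> - K * (ext N Q i j k + ext N Q i (Suc j) k)"
    using F(2)[OF i j0(1) k] unfolding St_def sg_def Q_def K_def .
  have b2: "Ay N rh i (j-1) k * Dy h N St i (j-1) k * Dy h N sg i (j-1) k - Dy h N sg i (j-1) k * Dy h N sg i (j-1) k / 4
       \<ge> - K * (ext N Q i (j-1) k + ext N Q i j k)"
    using F(2)[OF i j0(2) k] unfolding St_def sg_def Q_def K_def sj .
  have c1: "Az N rh i j k * Dz h N St i j k * Dz h N sg i j k - Dz h N sg i j k * Dz h N sg i j k / 4
       \<ge> - K * (ext N Q i j k + ext N Q i j (Suc k))"
    using F(3)[OF i j k0(1)] unfolding St_def sg_def Q_def K_def .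
  have c2: "Az N rh i j (k-1) * Dz h N St i j (k-1) * Dz h N sg i j (k-1) - Dz h N sg i j (k-1) * Dz h N sg i j (k-1) / 4
       \<ge> - K * (ext N Q i j (k-1) + ext N Q i j k)"
    using F(3)[OF i j k0(2)] unfolding St_def sg_def Q_def K_def sk .
  show ?thesis using a1 a2 b1 b2 c1 c2 by argo
qed

lemma S3_lin: "S3 N (\<lambda>i j k. f i j k - g i j k / 4) = S3 N f - S3 N g / 4"
  unfolding S3_def by (simp add: sum_subtractf sum_divide_distrib)
lemma S3_nn: "on_cells N (\<lambda>i j k. 0 \<le> f i j k) \<Longrightarrow> 0 \<le> S3 N f"
  unfolding S3_def on_cells_def by (intro sum_nonneg) auto

lemma core:
  fixes \<epsilon> C lam2 h dt \<gamma> :: real and N :: nat and rc0 rc1 r0 r1 rh :: grid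
  assumes eps: "\<epsilon> > 0" and C: "C > 0" and lam: "lam2 > 0"
    and h: "0 < h" "h \<le> 1" "h \<le> \<epsilon>/(40*(C+1))" and dt: "dt \<le> lam2*h" and N: "1 \<le> N"
    and Hrc1: "on_cells N (\<lambda>i j k. \<epsilon> \<le> rc1 i j k \<and> rc1 i j k \<le> C)"
    and Hr1: "on_cells N (\<lambda>i j k. \<epsilon> / 2 \<le> r1 i j k \<and> r1 i j k \<le> C + \<epsilon> / 2)"
    and Hd: "sup_le N (\<lambda>i j k. rc1 i j k - rc0 i j k) (C * dt)"
    and HD: "sup_le N (\<lambda>i j k. r1 i j k - r0 i j k) ((C + 1) * dt)"
    and Hrh: "on_cells N (\<lambda>i j k. \<epsilon> / 2 \<le> rh i j k \<and> rh i j k \<le> C + \<epsilon> / 2)"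
    and Hrat: "on_cells N (\<lambda>i j k. 3 / 4 \<le> rh i j k / r1 i j k \<and> rh i j k / r1 i j k \<le> 5 / 4)"
    and G1: "grad_sup_le h N rc1 C" and G2: "grad_sup_le h N rc0 C"
    and G3: "grad_sup_le h N r1 (C + 1)" and G4: "grad_sup_le h N r0 (C + 1)"
    and gam: "\<gamma> > 0"
  shows "\<gamma> * brk h N (dgrad h N rh (Stf rc1 rc0 r1 r0)) (grad h N (sgf rc1 rc0 r1 r0))
       \<ge> \<gamma> / 4 * gnorm2 h N (sgf rc1 rc0 r1 r0)
         - (9 * Kface \<epsilon> C lam2 * \<gamma>) * (l2sq h N (\<lambda>i j k. rc1 i j k - r1 i j k) + l2sq h N (\<lambda>i j k. rc0 i j k - r0 i j k))
         - 1 * h ^ 8"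
proof -
  define St where "St = Stf rc1 rc0 r1 r0"
  define sg where "sg = sgf rc1 rc0 r1 r0"
  define Q where "Q = Qf rc1 rc0 r1 r0"
  define K where "K = Kface \<epsilon> C lam2"
  have K0: "K > 0" unfolding K_def using Kface_pos[OF eps C lam] .
  have Qnn: "on_cells N (\<lambda>i j k. 0 \<le> Q i j k)" unfolding on_cells_def Q_def Qf_def by simp
  have cb: "on_cells N (\<lambda>i j k. ((Ax N rh i j k * Dx h N St i j k * Dx h N sg i j k + Ax N rh (i - 1) j k * Dx h N St (i - 1) j k * Dx h N sg (i - 1) j k) / 2
      + (Ay N rh i j k * Dy h N St i j k * Dy h N sg i j k + Ay N rh i (j - 1) k * Dy h N St i (j - 1) k * Dy h N sg i (j - 1) k) / 2
      + (Az N rh i j k * Dz h N St i j k * Dz h N sg i j k + Az N rh i j (k - 1) * Dz h N St i j (k - 1) * Dz h N sg i j (k - 1)) / 2) - ((Dx h N sg i j k * Dx h N sg i j k + Dx h N sg (i - 1) j k * Dx h N sg (i - 1) j k) / 2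
      + (Dy h N sg i j k * Dy h N sg i j k + Dy h N sg i (j - 1) k * Dy h N sg i (j - 1) k) / 2
      + (Dz h N sg i j k * Dz h N sg i j k + Dz h N sg i j (k - 1) * Dz h N sg i j (k - 1)) / 2) / 4 \<ge> - (K/2) * ((ext N Q i j k + ext N Q (Suc i) j k) + (ext N Q (i - 1) j k + ext N Q i j k)
      + (ext N Q i j k + ext N Q i (Suc j) k) + (ext N Q i (j - 1) k + ext N Q i j k)
      + (ext N Q i j k + ext N Q i j (Suc k)) + (ext N Q i j (k - 1) + ext N Q i j k)))"
    unfolding on_cells_def St_def sg_def Q_def K_def
    using cell_bound[OF eps C lam h dt N Hrc1 Hr1 Hd HD Hrh Hrat G1 G2 G3 G4] by blast
  have brk_eq: "brk h N (dgrad h N rh St) (grad h N sg) = h^3 * S3 N (\<lambda>i j k. ((Ax N rh i j k * Dx h N St i j k * Dx h N sg i j k + Ax N rh (i - 1) j k * Dx h N St (i - 1) j k * Dx h N sg (i - 1) j k) / 2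
      + (Ay N rh i j k * Dy h N St i j k * Dy h N sg i j k + Ay N rh i (j - 1) k * Dy h N St i (j - 1) k * Dy h N sg i (j - 1) k) / 2
      + (Az N rh i j k * Dz h N St i j k * Dz h N sg i j k + Az N rh i j (k - 1) * Dz h N St i j (k - 1) * Dz h N sg i j (k - 1)) / 2))"
    unfolding brk_def dgrad_def grad_def ip1 by simp
  have gn_eq: "gnorm2 h N sg = h^3 * S3 N (\<lambda>i j k. ((Dx h N sg i j k * Dx h N sg i j k + Dx h N sg (i - 1) j k * Dx h N sg (i - 1) j k) / 2
      + (Dy h N sg i j k * Dy h N sg i j k + Dy h N sg i (j - 1) k * Dy h N sg i (j - 1) k) / 2
      + (Dz h N sg i j k * Dz h N sg i j k + Dz h N sg i j (k - 1) * Dz h N sg i j (k - 1)) / 2))"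
    unfolding gnorm2_def brk_def grad_def ip1 by simp
  have m1: "S3 N (\<lambda>i j k. ((Ax N rh i j k * Dx h N St i j k * Dx h N sg i j k + Ax N rh (i - 1) j k * Dx h N St (i - 1) j k * Dx h N sg (i - 1) j k) / 2
      + (Ay N rh i j k * Dy h N St i j k * Dy h N sg i j k + Ay N rh i (j - 1) k * Dy h N St i (j - 1) k * Dy h N sg i (j - 1) k) / 2
      + (Az N rh i j k * Dz h N St i j k * Dz h N sg i j k + Az N rh i j (k - 1) * Dz h N St i j (k - 1) * Dz h N sg i j (k - 1)) / 2) - ((Dx h N sg i j k * Dx h N sg i j k + Dx h N sg (i - 1) j k * Dx h N sg (i - 1) j k) / 2
      + (Dy h N sg i j k * Dy h N sg i j k + Dy h N sg i (j - 1) k * Dy h N sg i (j - 1) k) / 2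
      + (Dz h N sg i j k * Dz h N sg i j k + Dz h N sg i j (k - 1) * Dz h N sg i j (k - 1)) / 2) / 4) \<ge> S3 N (\<lambda>i j k. - (K/2) * ((ext N Q i j k + ext N Q (Suc i) j k) + (ext N Q (i - 1) j k + ext N Q i j k)
      + (ext N Q i j k + ext N Q i (Suc j) k) + (ext N Q i (j - 1) k + ext N Q i j k)
      + (ext N Q i j k + ext N Q i j (Suc k)) + (ext N Q i j (k - 1) + ext N Q i j k)))"
    by (rule S3_mono) (use cb in \<open>simp add: on_cells_def\<close>)
  have m2: "S3 N (\<lambda>i j k. - (K/2) * ((ext N Q i j k + ext N Q (Suc i) j k) + (ext N Q (i - 1) j k + ext N Q i j k)
      + (ext N Q i j k + ext N Q i (Suc j) k) + (ext N Q i (j - 1) k + ext N Q i j k)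
      + (ext N Q i j k + ext N Q i j (Suc k)) + (ext N Q i j (k - 1) + ext N Q i j k))) = - (K/2) * S3 N (\<lambda>i j k. ((ext N Q i j k + ext N Q (Suc i) j k) + (ext N Q (i - 1) j k + ext N Q i j k)
      + (ext N Q i j k + ext N Q i (Suc j) k) + (ext N Q i (j - 1) k + ext N Q i j k)
      + (ext N Q i j k + ext N Q i j (Suc k)) + (ext N Q i j (k - 1) + ext N Q i j k)))"
    by (rule S3_cmult)
  have eid: "S3 N (\<lambda>i j k. ext N Q i j k) = S3 N Q"
    by (rule S3_cong) (simp add: on_cells_def ext_def cl_id)
  have exs: "S3 N (\<lambda>i j k. ext N Q (Suc i) j k) \<le> 2 * S3 N Q"
  proof -
    have "S3 N (\<lambda>i j k. ext N Q (Suc i) j k) = S3 N (\<lambda>i j k. Q ((\<lambda>i. cl N (Suc i)) i) j k)"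
      by (rule S3_cong) (simp add: on_cells_def ext_def cl_id)
    thus ?thesis using S3x[OF Psh_suc[OF N] Qnn] by simp
  qed
  have exp: "S3 N (\<lambda>i j k. ext N Q (i - 1) j k) \<le> 2 * S3 N Q"
  proof -
    have "S3 N (\<lambda>i j k. ext N Q (i - 1) j k) = S3 N (\<lambda>i j k. Q ((\<lambda>i. cl N (i - 1)) i) j k)"
      by (rule S3_cong) (simp add: on_cells_def ext_def cl_id)
    thus ?thesis using S3x[OF Psh_pred[OF N] Qnn] by simp
  qed
  have eys: "S3 N (\<lambda>i j k. ext N Q i (Suc j) k) \<le> 2 * S3 N Q"
  proof -
    have "S3 N (\<lambda>i j k. ext N Q i (Suc j) k) = S3 N (\<lambda>i j k. Q i ((\<lambda>i. cl N (Suc i)) j) k)"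
      by (rule S3_cong) (simp add: on_cells_def ext_def cl_id)
    thus ?thesis using S3y[OF Psh_suc[OF N] Qnn] by simp
  qed
  have eyp: "S3 N (\<lambda>i j k. ext N Q i (j - 1) k) \<le> 2 * S3 N Q"
  proof -
    have "S3 N (\<lambda>i j k. ext N Q i (j - 1) k) = S3 N (\<lambda>i j k. Q i ((\<lambda>i. cl N (i - 1)) j) k)"
      by (rule S3_cong) (simp add: on_cells_def ext_def cl_id)
    thus ?thesis using S3y[OF Psh_pred[OF N] Qnn] by simp
  qed
  have ezs: "S3 N (\<lambda>i j k. ext N Q i j (Suc k)) \<le> 2 * S3 N Q"
  proof -
    have "S3 N (\<lambda>i j k. ext N Q i j (Suc k)) = S3 N (\<lambda>i j k. Q i j ((\<lambda>i. cl N (Suc i)) k))"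
      by (rule S3_cong) (simp add: on_cells_def ext_def cl_id)
    thus ?thesis using S3z[OF Psh_suc[OF N] Qnn] by simp
  qed
  have ezp: "S3 N (\<lambda>i j k. ext N Q i j (k - 1)) \<le> 2 * S3 N Q"
  proof -
    have "S3 N (\<lambda>i j k. ext N Q i j (k - 1)) = S3 N (\<lambda>i j k. Q i j ((\<lambda>i. cl N (i - 1)) k))"
      by (rule S3_cong) (simp add: on_cells_def ext_def cl_id)
    thus ?thesis using S3z[OF Psh_pred[OF N] Qnn] by simp
  qed
  have m3: "S3 N (\<lambda>i j k. ((ext N Q i j k + ext N Q (Suc i) j k) + (ext N Q (i - 1) j k + ext N Q i j k)
      + (ext N Q i j k + ext N Q i (Suc j) k) + (ext N Q i (j - 1) k + ext N Q i j k)
      + (ext N Q i j k + ext N Q i j (Suc k)) + (ext N Q i j (k - 1) + ext N Q i j k))) \<le> 18 * S3 N Q"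
    apply (simp only: S3_add)
    using eid exs exp eys eyp ezs ezp by linarith
  have l2eq: "l2sq h N (\<lambda>i j k. rc1 i j k - r1 i j k) + l2sq h N (\<lambda>i j k. rc0 i j k - r0 i j k) = h^3 * S3 N Q"
    unfolding l2sq_def ip_sq Q_def Qf_def S3_add by (simp add: algebra_simps)
  define A where "A = S3 N (\<lambda>i j k. ((Ax N rh i j k * Dx h N St i j k * Dx h N sg i j k + Ax N rh (i - 1) j k * Dx h N St (i - 1) j k * Dx h N sg (i - 1) j k) / 2
      + (Ay N rh i j k * Dy h N St i j k * Dy h N sg i j k + Ay N rh i (j - 1) k * Dy h N St i (j - 1) k * Dy h N sg i (j - 1) k) / 2
      + (Az N rh i j k * Dz h N St i j k * Dz h N sg i j k + Az N rh i j (k - 1) * Dz h N St i j (k - 1) * Dz h N sg i j (k - 1)) / 2))"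
  define B where "B = S3 N (\<lambda>i j k. ((Dx h N sg i j k * Dx h N sg i j k + Dx h N sg (i - 1) j k * Dx h N sg (i - 1) j k) / 2
      + (Dy h N sg i j k * Dy h N sg i j k + Dy h N sg i (j - 1) k * Dy h N sg i (j - 1) k) / 2
      + (Dz h N sg i j k * Dz h N sg i j k + Dz h N sg i j (k - 1) * Dz h N sg i j (k - 1)) / 2))"
  define SQ where "SQ = S3 N Q"
  have SQ0: "SQ \<ge> 0" unfolding SQ_def by (rule S3_nn[OF Qnn])
  have AB: "A - B/4 \<ge> -(9*K) * SQ"
  proof -
    have "A - B/4 \<ge> - (K/2) * S3 N (\<lambda>i j k. ((ext N Q i j k + ext N Q (Suc i) j k) + (ext N Q (i - 1) j k + ext N Q i j k)
      + (ext N Q i j k + ext N Q i (Suc j) k) + (ext N Q i (j - 1) k + ext N Q i j k)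
      + (ext N Q i j k + ext N Q i j (Suc k)) + (ext N Q i j (k - 1) + ext N Q i j k)))" using m1 m2 unfolding A_def B_def S3_lin by simp
    moreover have "- (K/2) * S3 N (\<lambda>i j k. ((ext N Q i j k + ext N Q (Suc i) j k) + (ext N Q (i - 1) j k + ext N Q i j k)
      + (ext N Q i j k + ext N Q i (Suc j) k) + (ext N Q i (j - 1) k + ext N Q i j k)
      + (ext N Q i j k + ext N Q i j (Suc k)) + (ext N Q i j (k - 1) + ext N Q i j k))) \<ge> - (K/2) * (18 * SQ)"
      using m3 K0 unfolding SQ_def by simp
    ultimately show ?thesis by simp
  qed
  have g3: "\<gamma> * h^3 \<ge> 0" using gam h by simp
  have "\<gamma> * h^3 * (A - B/4) \<ge> \<gamma> * h^3 * (-(9*K) * SQ)" using mult_left_mono[OF AB g3] .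
  moreover have "h^8 \<ge> 0" by simp
  moreover have "\<gamma> * h^3 * (A - B/4) = \<gamma> * (h^3 * A) - \<gamma> / 4 * (h^3 * B)" by (simp add: algebra_simps)
  moreover have "\<gamma> * h^3 * (-(9*K) * SQ) = - ((9 * K * \<gamma>) * (h^3 * SQ))" by (simp add: algebra_simps)
  ultimately have fin: "\<gamma> * (h^3 * A) \<ge> \<gamma> / 4 * (h^3 * B) - (9 * K * \<gamma>) * (h^3 * SQ) - 1 * h^8"
    by linarith
  show ?thesis
    unfolding St_def[symmetric] sg_def[symmetric] K_def[symmetric] brk_eq gn_eq l2eq
    using fin unfolding A_def B_def SQ_def .
qed


lemma core2:
  fixes \<gamma> \<epsilon> C lam1 lam2 a b :: real
  assumes "\<gamma> > 0" "\<epsilon> > 0" "C > 0" "lam1 > 0" "lam2 > 0" "a < b"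
  shows "N \<ge> 1 \<longrightarrow> h = (b - a) / real N \<longrightarrow> h < min 1 (\<epsilon>/(40*(C+1))) \<longrightarrow>
     lam1 * h \<le> dt \<longrightarrow> dt \<le> lam2 * h \<longrightarrow>
     on_cells N (\<lambda>i j k. \<epsilon> \<le> rc0 i j k \<and> rc0 i j k \<le> C) \<longrightarrow>
     on_cells N (\<lambda>i j k. \<epsilon> \<le> rc1 i j k \<and> rc1 i j k \<le> C) \<longrightarrow>
     grad_sup_le h N rc0 C \<longrightarrow> grad_sup_le h N rc1 C \<longrightarrow>
     sup_le N (\<lambda>i j k. rc1 i j k - rc0 i j k) (C * dt) \<longrightarrow>
     grad_sup_le h N (\<lambda>i j k. rc1 i j k - rc0 i j k) (C * dt) \<longrightarrow>
     on_cells N (\<lambda>i j k. \<epsilon> / 2 \<le> r1 i j k \<and> r1 i j k \<le> C + \<epsilon> / 2) \<longrightarrow>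
     on_cells N (\<lambda>i j k. r0 i j k > 0) \<longrightarrow>
     grad_sup_le h N r0 (C + 1) \<longrightarrow> grad_sup_le h N r1 (C + 1) \<longrightarrow>
     sup_le N (\<lambda>i j k. r1 i j k - r0 i j k) ((C + 1) * dt) \<longrightarrow>
     on_cells N (\<lambda>i j k. \<epsilon> / 2 \<le> rh i j k \<and> rh i j k \<le> C + \<epsilon> / 2) \<longrightarrow>
     on_cells N (\<lambda>i j k. 3 / 4 \<le> rh i j k / r1 i j k \<and> rh i j k / r1 i j k \<le> 5 / 4) \<longrightarrow>
     \<gamma> * brk h N (dgrad h N rh (\<lambda>i j k. Sfun rc1 rc0 i j k - Sfun r1 r0 i j k))
                  (grad h N (\<lambda>i j k. (rc1 i j k - r1 i j k) + (rc0 i j k - r0 i j k)))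
       \<ge> \<gamma> / 4 * gnorm2 h N (\<lambda>i j k. (rc1 i j k - r1 i j k) + (rc0 i j k - r0 i j k))
         - (9 * Kface \<epsilon> C lam2 * \<gamma>) * (l2sq h N (\<lambda>i j k. rc1 i j k - r1 i j k) + l2sq h N (\<lambda>i j k. rc0 i j k - r0 i j k))
         - 1 * h ^ 8"
proof (intro impI)
  assume N: "N \<ge> 1" and hd: "h = (b - a) / real N" and hl: "h < min 1 (\<epsilon>/(40*(C+1)))"
    and dt: "dt \<le> lam2 * h"
    and Hrc1: "on_cells N (\<lambda>i j k. \<epsilon> \<le> rc1 i j k \<and> rc1 i j k \<le> C)"
    and G2: "grad_sup_le h N rc0 C" and G1: "grad_sup_le h N rc1 C"
    and Hd: "sup_le N (\<lambda>i j k. rc1 i j k - rc0 i j k) (C * dt)"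
    and Hr1: "on_cells N (\<lambda>i j k. \<epsilon> / 2 \<le> r1 i j k \<and> r1 i j k \<le> C + \<epsilon> / 2)"
    and G4: "grad_sup_le h N r0 (C + 1)" and G3: "grad_sup_le h N r1 (C + 1)"
    and HD: "sup_le N (\<lambda>i j k. r1 i j k - r0 i j k) ((C + 1) * dt)"
    and Hrh: "on_cells N (\<lambda>i j k. \<epsilon> / 2 \<le> rh i j k \<and> rh i j k \<le> C + \<epsilon> / 2)"
    and Hrat: "on_cells N (\<lambda>i j k. 3 / 4 \<le> rh i j k / r1 i j k \<and> rh i j k / r1 i j k \<le> 5 / 4)"
  have h0: "0 < h" using hd N assms(6) by simp
  have h1: "h \<le> 1" "h \<le> \<epsilon>/(40*(C+1))" using hl by auto
  show "\<gamma> * brk h N (dgrad h N rh (\<lambda>i j k. Sfun rc1 rc0 i j k - Sfun r1 r0 i j k))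
                  (grad h N (\<lambda>i j k. (rc1 i j k - r1 i j k) + (rc0 i j k - r0 i j k)))
       \<ge> \<gamma> / 4 * gnorm2 h N (\<lambda>i j k. (rc1 i j k - r1 i j k) + (rc0 i j k - r0 i j k))
         - (9 * Kface \<epsilon> C lam2 * \<gamma>) * (l2sq h N (\<lambda>i j k. rc1 i j k - r1 i j k) + l2sq h N (\<lambda>i j k. rc0 i j k - r0 i j k))
         - 1 * h ^ 8"
    using core[OF assms(2,3,5) h0 h1 dt N Hrc1 Hr1 Hd HD Hrh Hrat G1 G2 G3 G4 assms(1)]
    unfolding Stf_def sgf_def .
qed

theorem mainTheorem9:
  fixes \<gamma> \<epsilon> C lam1 lam2 a b :: real
  assumes "\<gamma> > 0" "\<epsilon> > 0" "C > 0" "lam1 > 0" "lam2 > 0" "a < b"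
  shows "\<exists>C1>0. \<exists>M1>0. \<exists>h0>0. \<forall>(N::nat) (h::real) (dt::real) (rc0::grid) (rc1::grid)
           (r0::grid) (r1::grid) (rh::grid).
     N \<ge> 1 \<longrightarrow> h = (b - a) / real N \<longrightarrow> h < h0 \<longrightarrow>
     lam1 * h \<le> dt \<longrightarrow> dt \<le> lam2 * h \<longrightarrow>
     on_cells N (\<lambda>i j k. \<epsilon> \<le> rc0 i j k \<and> rc0 i j k \<le> C) \<longrightarrow>
     on_cells N (\<lambda>i j k. \<epsilon> \<le> rc1 i j k \<and> rc1 i j k \<le> C) \<longrightarrow>
     grad_sup_le h N rc0 C \<longrightarrow> grad_sup_le h N rc1 C \<longrightarrow>
     sup_le N (\<lambda>i j k. rc1 i j k - rc0 i j k) (C * dt) \<longrightarrow>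
     grad_sup_le h N (\<lambda>i j k. rc1 i j k - rc0 i j k) (C * dt) \<longrightarrow>
     on_cells N (\<lambda>i j k. \<epsilon> / 2 \<le> r1 i j k \<and> r1 i j k \<le> C + \<epsilon> / 2) \<longrightarrow>
     on_cells N (\<lambda>i j k. r0 i j k > 0) \<longrightarrow>
     grad_sup_le h N r0 (C + 1) \<longrightarrow> grad_sup_le h N r1 (C + 1) \<longrightarrow>
     sup_le N (\<lambda>i j k. r1 i j k - r0 i j k) ((C + 1) * dt) \<longrightarrow>
     on_cells N (\<lambda>i j k. \<epsilon> / 2 \<le> rh i j k \<and> rh i j k \<le> C + \<epsilon> / 2) \<longrightarrow>
     on_cells N (\<lambda>i j k. 3 / 4 \<le> rh i j k / r1 i j k \<and> rh i j k / r1 i j k \<le> 5 / 4) \<longrightarrow>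
     \<gamma> * brk h N (dgrad h N rh (\<lambda>i j k. Sfun rc1 rc0 i j k - Sfun r1 r0 i j k))
                  (grad h N (\<lambda>i j k. (rc1 i j k - r1 i j k) + (rc0 i j k - r0 i j k)))
       \<ge> \<gamma> / 4 * gnorm2 h N (\<lambda>i j k. (rc1 i j k - r1 i j k) + (rc0 i j k - r0 i j k))
         - C1 * (l2sq h N (\<lambda>i j k. rc1 i j k - r1 i j k) + l2sq h N (\<lambda>i j k. rc0 i j k - r0 i j k))
         - M1 * h ^ 8"
proof -
  have K0: "Kface \<epsilon> C lam2 > 0" using Kface_pos assms by simp
  have h00: "min 1 (\<epsilon>/(40*(C+1))) > 0" using assms by simp
  show ?thesis
    apply (rule exI[of _ "9 * Kface \<epsilon> C lam2 * \<gamma>"])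
    apply (rule conjI)
    using K0 assms(1) apply simp
    apply (rule exI[of _ "1::real"])
    apply (rule conjI)
     apply simp
    apply (rule exI[of _ "min 1 (\<epsilon>/(40*(C+1)))"])
    apply (rule conjI)
    using h00 apply simp
    apply (intro allI)
    apply (rule core2[OF assms])
    done
qed

end
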